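(* Let $W$ be a binary MAC with $m$ users, let $X[E_m]$ have i.i.d. uniform components on $\mathbb{F}_2$, and let $Y$ be the output of $W$ on input $X[E_m]$. If $I(X[S];Y,X[S^c])$ is an integer for every $S\subseteq E_m$, then $I(X[E_m]\cdot S;Y)\in\{0,1\}$ for every $S\subseteq E_m$, and the family $(I(X[E_m]\cdot S;Y))_{S\subseteq E_m}$ is uniquely determined by the family $(I(X[S];Y,X[S^c]))_{S\subseteq E_m}$. Conversely, if $I(X[E_m]\cdot S;Y)\in\{0,1\}$ for every $S\subseteq E_m$, then $I(X[S];Y,X[S^c])$ is an integer for every $S\subseteq E_m$ and the family $(I(X[S];Y,X[S^c]))_{S}$ is uniquely determined by the family $(I(X[E_m]\cdot S;Y))_{S}$.
   Context: A binary MAC with $m$ users is a channel $W$ with input alphabet $\mathbb{F}_2^m$ and finite output alphabet. $E_m=\{1,\dots,m\}$; for $S\subseteq E_m$, $X[S]=(X[i])_{i\in S}$, $S^c=E_m\setminus S$, and $X[E_m]\cdot S=\bigoplus_{i\in S}X[i]$ (sum in $\mathbb{F}_2$). Mutual information is in bits. "Uniquely determined" means that any two binary MACs with $m$ users having the same values of the given family also have the same values of the other family. *)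

theory Defs
  imports Complex_Main
begin

text \<open>Users are E_m = {1..m}. An input vector X[E_m] in F_2^m is represented by the
  set x \<subseteq> {1..m} of users whose bit equals 1.\<close>

definition users :: "nat \<Rightarrow> nat set" where
  "users m = {1..m}"

definition inputs :: "nat \<Rightarrow> nat set set" where
  "inputs m = Pow (users m)"

definition binary_mac :: "nat \<Rightarrow> (nat set \<Rightarrow> 'b::finite \<Rightarrow> real) \<Rightarrow> bool" where
  "binary_mac m W \<longleftrightarrow>
     (\<forall>x\<in>inputs m. (\<forall>y. 0 \<le> W x y) \<and> (\<Sum>y\<in>UNIV. W x y) = 1)"

definition mutual_info :: "'o set \<Rightarrow> ('o \<Rightarrow> real) \<Rightarrow> ('o \<Rightarrow> 'a) \<Rightarrow> ('o \<Rightarrow> 'c) \<Rightarrow> real" where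
  "mutual_info \<Omega> p A B =
     (\<Sum>a\<in>A ` \<Omega>. \<Sum>b\<in>B ` \<Omega>.
        let pab = (\<Sum>\<omega>\<in>{\<omega>\<in>\<Omega>. A \<omega> = a \<and> B \<omega> = b}. p \<omega>);
            pa = (\<Sum>\<omega>\<in>{\<omega>\<in>\<Omega>. A \<omega> = a}. p \<omega>);
            pb = (\<Sum>\<omega>\<in>{\<omega>\<in>\<Omega>. B \<omega> = b}. p \<omega>)
        in if pab = 0 then 0 else pab * log 2 (pab / (pa * pb)))"

definition mac_space :: "nat \<Rightarrow> (nat set \<times> 'b::finite) set" where
  "mac_space m = inputs m \<times> UNIV"

definition mac_pmf :: "nat \<Rightarrow> (nat set \<Rightarrow> 'b::finite \<Rightarrow> real) \<Rightarrow> nat set \<times> 'b \<Rightarrow> real" where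
  "mac_pmf m W = (\<lambda>(x, y). W x y / 2 ^ m)"

definition cond_mi :: "nat \<Rightarrow> (nat set \<Rightarrow> 'b::finite \<Rightarrow> real) \<Rightarrow> nat set \<Rightarrow> real" where
  "cond_mi m W S = mutual_info (mac_space m) (mac_pmf m W)
      (\<lambda>(x, y). x \<inter> S) (\<lambda>(x, y). (y, x \<inter> (users m - S)))"

text \<open>I(X[E_m] . S; Y), where X[E_m] . S is the F_2-sum of the bits indexed by S
  (True iff an odd number of users in S send 1).\<close>

definition lin_mi :: "nat \<Rightarrow> (nat set \<Rightarrow> 'b::finite \<Rightarrow> real) \<Rightarrow> nat set \<Rightarrow> real" where
  "lin_mi m W S = mutual_info (mac_space m) (mac_pmf m W)
      (\<lambda>(x, y). odd (card (x \<inter> S))) (\<lambda>(x, y). y)"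

end

theory Submission
  imports Defs "HOL-Computational_Algebra.Primes"
begin


definition prb :: "'o set \<Rightarrow> ('o \<Rightarrow> real) \<Rightarrow> ('o \<Rightarrow> 'a) \<Rightarrow> 'o \<Rightarrow> real" where
  "prb \<Omega> p A \<omega> = (\<Sum>\<omega>'\<in>{\<omega>'\<in>\<Omega>. A \<omega>' = A \<omega>}. p \<omega>')"

definition ent :: "'o set \<Rightarrow> ('o \<Rightarrow> real) \<Rightarrow> ('o \<Rightarrow> 'a) \<Rightarrow> real" where
  "ent \<Omega> p A = - (\<Sum>\<omega>\<in>\<Omega>. p \<omega> * log 2 (prb \<Omega> p A \<omega>))"

lemma prb_ge: assumes "finite \<Omega>" "\<forall>\<omega>\<in>\<Omega>. p \<omega> \<ge> 0" "\<omega> \<in> \<Omega>"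
  shows "prb \<Omega> p A \<omega> \<ge> p \<omega>"
proof -
  have "p \<omega> = (\<Sum>\<omega>'\<in>{\<omega>}. p \<omega>')" by simp
  also have "\<dots> \<le> prb \<Omega> p A \<omega>" unfolding prb_def
    using assms by (intro sum_mono2) auto
  finally show ?thesis .
qed

lemma prb_nonneg: assumes "\<forall>\<omega>\<in>\<Omega>. p \<omega> \<ge> 0"
  shows "prb \<Omega> p A \<omega> \<ge> 0"
  unfolding prb_def using assms by (intro sum_nonneg) auto

lemma prb_cong: assumes "\<forall>\<omega>\<in>\<Omega>. \<forall>\<omega>'\<in>\<Omega>. A \<omega> = A \<omega>' \<longleftrightarrow> B \<omega> = B \<omega>'" "\<omega> \<in> \<Omega>"
  shows "prb \<Omega> p A \<omega> = prb \<Omega> p B \<omega>"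
  unfolding prb_def using assms by (intro sum.cong) auto

lemma ent_cong: assumes "\<forall>\<omega>\<in>\<Omega>. \<forall>\<omega>'\<in>\<Omega>. A \<omega> = A \<omega>' \<longleftrightarrow> B \<omega> = B \<omega>'"
  shows "ent \<Omega> p A = ent \<Omega> p B"
  unfolding ent_def using prb_cong[OF assms] by (intro arg_cong[where f=uminus] sum.cong) auto

lemma mi_ent:
  assumes fin: "finite \<Omega>" and nn: "\<forall>\<omega>\<in>\<Omega>. p \<omega> \<ge> 0"
  shows "mutual_info \<Omega> p A B = ent \<Omega> p A + ent \<Omega> p B - ent \<Omega> p (\<lambda>\<omega>. (A \<omega>, B \<omega>))"
proof -
  define pab where "pab = (\<lambda>a b. \<Sum>\<omega>\<in>{\<omega>\<in>\<Omega>. A \<omega> = a \<and> B \<omega> = b}. p \<omega>)"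
  define pa where "pa = (\<lambda>a. \<Sum>\<omega>\<in>{\<omega>\<in>\<Omega>. A \<omega> = a}. p \<omega>)"
  define pb where "pb = (\<lambda>b. \<Sum>\<omega>\<in>{\<omega>\<in>\<Omega>. B \<omega> = b}. p \<omega>)"
  define L where "L = (\<lambda>a b. if pab a b = 0 then 0 else log 2 (pab a b / (pa a * pb b)))"
  have mi: "mutual_info \<Omega> p A B = (\<Sum>a\<in>A ` \<Omega>. \<Sum>b\<in>B ` \<Omega>. pab a b * L a b)"
    unfolding mutual_info_def pab_def pa_def pb_def L_def Let_def
    by (intro sum.cong refl) auto
  have "(\<Sum>a\<in>A ` \<Omega>. \<Sum>b\<in>B ` \<Omega>. pab a b * L a b)
      = (\<Sum>ab\<in>A ` \<Omega> \<times> B ` \<Omega>. pab (fst ab) (snd ab) * L (fst ab) (snd ab))"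
    by (simp add: sum.cartesian_product split_def)
  also have "\<dots> = (\<Sum>ab\<in>A ` \<Omega> \<times> B ` \<Omega>. \<Sum>\<omega>\<in>{\<omega>\<in>\<Omega>. (A \<omega>, B \<omega>) = ab}. p \<omega> * L (A \<omega>) (B \<omega>))"
    unfolding pab_def by (intro sum.cong refl) (auto simp: sum_distrib_right intro!: sum.cong)
  also have "\<dots> = (\<Sum>\<omega>\<in>\<Omega>. p \<omega> * L (A \<omega>) (B \<omega>))"
    using fin by (intro sum.group) auto
  finally have mi2: "mutual_info \<Omega> p A B = (\<Sum>\<omega>\<in>\<Omega>. p \<omega> * L (A \<omega>) (B \<omega>))" using mi by simp
  have pt: "p \<omega> * L (A \<omega>) (B \<omega>) = - p \<omega> * log 2 (prb \<Omega> p A \<omega>) - p \<omega> * log 2 (prb \<Omega> p B \<omega>)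
       + p \<omega> * log 2 (prb \<Omega> p (\<lambda>\<omega>. (A \<omega>, B \<omega>)) \<omega>)" if w: "\<omega> \<in> \<Omega>" for \<omega>
  proof (cases "p \<omega> = 0")
    case True then show ?thesis by simp
  next
    case False
    then have pos: "p \<omega> > 0" using nn w by force
    have e1: "prb \<Omega> p A \<omega> = pa (A \<omega>)" unfolding prb_def pa_def ..
    have e2: "prb \<Omega> p B \<omega> = pb (B \<omega>)" unfolding prb_def pb_def ..
    have e3: "prb \<Omega> p (\<lambda>\<omega>. (A \<omega>, B \<omega>)) \<omega> = pab (A \<omega>) (B \<omega>)" unfolding prb_def pab_def by simp
    have g1: "prb \<Omega> p A \<omega> > 0" using prb_ge[OF fin nn w, of A] pos by linarith
    have g2: "prb \<Omega> p B \<omega> > 0" using prb_ge[OF fin nn w, of B] pos by linarith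
    have g3: "prb \<Omega> p (\<lambda>\<omega>. (A \<omega>, B \<omega>)) \<omega> > 0" using prb_ge[OF fin nn w, of "\<lambda>\<omega>. (A \<omega>, B \<omega>)"] pos by linarith
    have hL: "L (A \<omega>) (B \<omega>) = log 2 (pab (A \<omega>) (B \<omega>)) - log 2 (pa (A \<omega>)) - log 2 (pb (B \<omega>))"
      using g1 g2 g3 unfolding L_def e1 e2 e3 by (simp add: log_divide log_mult)
    show ?thesis unfolding e1 e2 e3 hL by (simp add: algebra_simps)
  qed
  have "(\<Sum>\<omega>\<in>\<Omega>. p \<omega> * L (A \<omega>) (B \<omega>)) = (\<Sum>\<omega>\<in>\<Omega>. - p \<omega> * log 2 (prb \<Omega> p A \<omega>) - p \<omega> * log 2 (prb \<Omega> p B \<omega>)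
       + p \<omega> * log 2 (prb \<Omega> p (\<lambda>\<omega>. (A \<omega>, B \<omega>)) \<omega>))"
    using pt by (rule sum.cong[OF refl])
  then show ?thesis unfolding mi2 ent_def
    by (simp add: sum.distrib sum_subtractf sum_negf)
qed


lemma prb_pos: assumes "finite \<Omega>" "\<forall>\<omega>\<in>\<Omega>. p \<omega> \<ge> 0" "\<omega> \<in> \<Omega>" "p \<omega> > 0"
  shows "prb \<Omega> p A \<omega> > 0"
  using prb_ge[OF assms(1-3), of A] assms(4) by linarith

lemma key_sum:
  fixes Z :: "'o \<Rightarrow> 'z" and B :: "'o \<Rightarrow> bool"
  assumes fin: "finite \<Omega>" and nn: "\<forall>\<omega>\<in>\<Omega>. p \<omega> \<ge> 0" and tot: "(\<Sum>\<omega>\<in>\<Omega>. p \<omega>) = 1"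
  shows "(\<Sum>\<omega>\<in>\<Omega>. p \<omega> * (prb \<Omega> p Z \<omega> / prb \<Omega> p (\<lambda>\<omega>. (Z \<omega>, B \<omega>)) \<omega>)) \<le> 2"
proof -
  let ?PZ = "prb \<Omega> p Z" and ?PB = "prb \<Omega> p (\<lambda>\<omega>. (Z \<omega>, B \<omega>))"
  define Q where "Q = (\<lambda>\<omega>. \<Sum>\<omega>'\<in>{\<omega>'\<in>\<Omega>. Z \<omega>' = Z \<omega> \<and> B \<omega>' \<noteq> B \<omega>}. p \<omega>')"
  have split: "?PZ \<omega> = ?PB \<omega> + Q \<omega>" for \<omega>
  proof -
    have "{\<omega>'\<in>\<Omega>. Z \<omega>' = Z \<omega>} = {\<omega>'\<in>\<Omega>. (Z \<omega>', B \<omega>') = (Z \<omega>, B \<omega>)} \<union> {\<omega>'\<in>\<Omega>. Z \<omega>' = Z \<omega> \<and> B \<omega>' \<noteq> B \<omega>}"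
      by auto
    then show ?thesis unfolding prb_def Q_def using fin
      by (simp add: sum.union_disjoint[symmetric] disjoint_iff)
  qed
  have t: "p \<omega> * (?PZ \<omega> / ?PB \<omega>) = p \<omega> + p \<omega> * Q \<omega> / ?PB \<omega>" if w: "\<omega> \<in> \<Omega>" for \<omega>
  proof (cases "p \<omega> = 0")
    case True then show ?thesis by simp
  next
    case False
    then have "p \<omega> > 0" using nn w by force
    then have "?PB \<omega> > 0" using prb_pos[OF fin nn w] by blast
    then show ?thesis unfolding split by (simp add: field_simps)
  qed
  have inner: "(\<Sum>\<omega>\<in>{\<omega>\<in>\<Omega>. Z \<omega> = Z \<omega>' \<and> B \<omega> \<noteq> B \<omega>'}. p \<omega> / ?PB \<omega>) \<le> 1" for \<omega>'
  proof -
    define S where "S = {\<omega>\<in>\<Omega>. Z \<omega> = Z \<omega>' \<and> B \<omega> \<noteq> B \<omega>'}"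
    define c where "c = (\<Sum>\<omega>\<in>S. p \<omega>)"
    have pbS: "?PB \<omega> = c" if "\<omega> \<in> S" for \<omega>
      unfolding prb_def c_def S_def using that S_def by (intro sum.cong) auto
    have "(\<Sum>\<omega>\<in>S. p \<omega> / ?PB \<omega>) = (\<Sum>\<omega>\<in>S. p \<omega> / c)" using pbS by simp
    also have "\<dots> = c / c" unfolding c_def by (rule sum_divide_distrib[symmetric])
    also have "\<dots> \<le> 1" by simp
    finally show ?thesis unfolding S_def .
  qed
  have "(\<Sum>\<omega>\<in>\<Omega>. p \<omega> * Q \<omega> / ?PB \<omega>)
      = (\<Sum>\<omega>\<in>\<Omega>. \<Sum>\<omega>'\<in>\<Omega>. (if Z \<omega>' = Z \<omega> \<and> B \<omega>' \<noteq> B \<omega> then p \<omega> * p \<omega>' / ?PB \<omega> else 0))"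
    unfolding Q_def using fin
    by (intro sum.cong refl) (simp add: sum_distrib_left sum_divide_distrib sum.inter_filter[symmetric])
  also have "\<dots> = (\<Sum>\<omega>'\<in>\<Omega>. \<Sum>\<omega>\<in>\<Omega>. (if Z \<omega>' = Z \<omega> \<and> B \<omega>' \<noteq> B \<omega> then p \<omega> * p \<omega>' / ?PB \<omega> else 0))"
    by (rule sum.swap)
  also have "\<dots> = (\<Sum>\<omega>'\<in>\<Omega>. p \<omega>' * (\<Sum>\<omega>\<in>{\<omega>\<in>\<Omega>. Z \<omega> = Z \<omega>' \<and> B \<omega> \<noteq> B \<omega>'}. p \<omega> / ?PB \<omega>))"
    using fin by (intro sum.cong refl) (auto simp: sum_distrib_left sum.inter_filter[symmetric] intro!: sum.cong)
  also have "\<dots> \<le> (\<Sum>\<omega>'\<in>\<Omega>. p \<omega>' * 1)"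
    using nn inner by (intro sum_mono mult_left_mono) auto
  finally have "(\<Sum>\<omega>\<in>\<Omega>. p \<omega> * Q \<omega> / ?PB \<omega>) \<le> 1" using tot by simp
  moreover have "(\<Sum>\<omega>\<in>\<Omega>. p \<omega> * (?PZ \<omega> / ?PB \<omega>)) = 1 + (\<Sum>\<omega>\<in>\<Omega>. p \<omega> * Q \<omega> / ?PB \<omega>)"
    using t tot by (simp add: sum.distrib)
  ultimately show ?thesis by simp
qed


lemma dich:
  fixes Z :: "'o \<Rightarrow> 'z" and B :: "'o \<Rightarrow> bool"
  assumes fin: "finite \<Omega>" and nn: "\<forall>\<omega>\<in>\<Omega>. p \<omega> \<ge> 0" and tot: "(\<Sum>\<omega>\<in>\<Omega>. p \<omega>) = 1"
  defines "\<Delta> \<equiv> ent \<Omega> p (\<lambda>\<omega>. (Z \<omega>, B \<omega>)) - ent \<Omega> p Z"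
  shows "0 \<le> \<Delta>" "\<Delta> \<le> 1"
    "\<Delta> = 0 \<Longrightarrow> \<forall>\<omega>\<in>\<Omega>. p \<omega> > 0 \<longrightarrow> prb \<Omega> p (\<lambda>\<omega>. (Z \<omega>, B \<omega>)) \<omega> = prb \<Omega> p Z \<omega>"
    "\<Delta> = 1 \<Longrightarrow> \<forall>\<omega>\<in>\<Omega>. p \<omega> > 0 \<longrightarrow> prb \<Omega> p Z \<omega> = 2 * prb \<Omega> p (\<lambda>\<omega>. (Z \<omega>, B \<omega>)) \<omega>"
proof -
  let ?PZ = "prb \<Omega> p Z" and ?PB = "prb \<Omega> p (\<lambda>\<omega>. (Z \<omega>, B \<omega>))"
  have le: "?PB \<omega> \<le> ?PZ \<omega>" for \<omega>
    unfolding prb_def using fin nn by (intro sum_mono2) auto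
  define t where "t = (\<lambda>\<omega>. p \<omega> * log 2 (?PZ \<omega> / ?PB \<omega>))"
  have D: "\<Delta> = (\<Sum>\<omega>\<in>\<Omega>. t \<omega>)"
  proof -
    have "t \<omega> = p \<omega> * log 2 (?PZ \<omega>) - p \<omega> * log 2 (?PB \<omega>)" if w: "\<omega> \<in> \<Omega>" for \<omega>
    proof (cases "p \<omega> = 0")
      case True then show ?thesis unfolding t_def by simp
    next
      case False
      then have "p \<omega> > 0" using nn w by force
      then have "?PB \<omega> > 0" "?PZ \<omega> > 0" using prb_pos[OF fin nn w] by blast+
      then show ?thesis unfolding t_def by (simp add: log_divide right_diff_distrib)
    qed
    then show ?thesis unfolding \<Delta>_def ent_def by (simp add: sum_subtractf cong: sum.cong)
  qed
  have tnn: "t \<omega> \<ge> 0" if w: "\<omega> \<in> \<Omega>" for \<omega>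
  proof (cases "p \<omega> = 0")
    case True then show ?thesis unfolding t_def by simp
  next
    case False
    then have "p \<omega> > 0" using nn w by force
    moreover have "?PB \<omega> > 0" using prb_pos[OF fin nn w] \<open>p \<omega> > 0\<close> by blast
    ultimately show ?thesis unfolding t_def using le[of \<omega>] by (intro mult_nonneg_nonneg) auto
  qed
  show "0 \<le> \<Delta>" unfolding D using tnn by (intro sum_nonneg) auto
  show "\<Delta> = 0 \<Longrightarrow> \<forall>\<omega>\<in>\<Omega>. p \<omega> > 0 \<longrightarrow> ?PB \<omega> = ?PZ \<omega>"
  proof (intro ballI impI)
    fix \<omega> assume "\<Delta> = 0" and w: "\<omega> \<in> \<Omega>" and pos: "p \<omega> > 0"
    then have "t \<omega> = 0" using sum_nonneg_eq_0_iff[OF fin, of t] tnn D by auto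
    then have "log 2 (?PZ \<omega> / ?PB \<omega>) = 0" unfolding t_def using pos by simp
    moreover have "?PB \<omega> > 0" "?PZ \<omega> > 0" using prb_pos[OF fin nn w] pos by blast+
    ultimately have "?PZ \<omega> / ?PB \<omega> = 1"
      using powr_log_cancel[of 2 "?PZ \<omega> / ?PB \<omega>"] by simp
    then show "?PB \<omega> = ?PZ \<omega>" using \<open>?PB \<omega> > 0\<close> by (simp add: field_simps)
  qed
  define r where "r = (\<lambda>\<omega>. ?PZ \<omega> / (2 * ?PB \<omega>))"
  define g where "g = (\<lambda>\<omega>. p \<omega> * (r \<omega> - 1) / ln 2 - p \<omega> * log 2 (r \<omega>))"
  have gnn: "g \<omega> \<ge> 0" if w: "\<omega> \<in> \<Omega>" for \<omega>
  proof (cases "p \<omega> = 0")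
    case True then show ?thesis unfolding g_def by simp
  next
    case False
    then have pos: "p \<omega> > 0" using nn w by force
    then have "?PB \<omega> > 0" "?PZ \<omega> > 0" using prb_pos[OF fin nn w] by blast+
    then have rp: "r \<omega> > 0" unfolding r_def by simp
    have "ln (r \<omega>) \<le> r \<omega> - 1" using ln_le_minus_one[OF rp] .
    then have "log 2 (r \<omega>) \<le> (r \<omega> - 1) / ln 2" by (simp add: log_def divide_right_mono)
    then show ?thesis unfolding g_def using pos
      by (simp add: mult_left_mono flip: times_divide_eq_right right_diff_distrib)
  qed
  have lr: "p \<omega> * log 2 (r \<omega>) = t \<omega> - p \<omega>" if w: "\<omega> \<in> \<Omega>" for \<omega>
  proof (cases "p \<omega> = 0")
    case True then show ?thesis unfolding t_def by simp
  next
    case False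
    then have pos: "p \<omega> > 0" using nn w by force
    then have "?PB \<omega> > 0" "?PZ \<omega> > 0" using prb_pos[OF fin nn w] by blast+
    then have "log 2 (r \<omega>) = log 2 (?PZ \<omega> / ?PB \<omega>) - 1" unfolding r_def
      by (simp add: log_divide log_mult)
    then show ?thesis unfolding t_def by (simp add: right_diff_distrib)
  qed
  have pr: "(\<Sum>\<omega>\<in>\<Omega>. p \<omega> * r \<omega>) \<le> 1"
  proof -
    have "(\<Sum>\<omega>\<in>\<Omega>. p \<omega> * r \<omega>) = (\<Sum>\<omega>\<in>\<Omega>. p \<omega> * (?PZ \<omega> / ?PB \<omega>)) / 2"
      unfolding r_def by (simp add: sum_divide_distrib mult.commute)
    also have "\<dots> \<le> 2 / 2" using key_sum[OF fin nn tot, of Z B] by (intro divide_right_mono) auto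
    finally show ?thesis by simp
  qed
  have sg: "(\<Sum>\<omega>\<in>\<Omega>. g \<omega>) = ((\<Sum>\<omega>\<in>\<Omega>. p \<omega> * r \<omega>) - 1) / ln 2 - (\<Delta> - 1)"
  proof -
    have "(\<Sum>\<omega>\<in>\<Omega>. g \<omega>) = (\<Sum>\<omega>\<in>\<Omega>. p \<omega> * r \<omega> / ln 2 - p \<omega> / ln 2 - (t \<omega> - p \<omega>))"
      unfolding g_def using lr by (intro sum.cong) (auto simp: algebra_simps diff_divide_distrib)
    also have "\<dots> = (\<Sum>\<omega>\<in>\<Omega>. p \<omega> * r \<omega>) / ln 2 - 1 / ln 2 - (\<Delta> - 1)"
      using tot D by (simp add: sum_subtractf sum_divide_distrib[symmetric])
    finally show ?thesis by (simp add: diff_divide_distrib)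
  qed
  have sg0: "(\<Sum>\<omega>\<in>\<Omega>. g \<omega>) \<ge> 0" using gnn by (intro sum_nonneg) auto
  have "((\<Sum>\<omega>\<in>\<Omega>. p \<omega> * r \<omega>) - 1) / ln 2 \<le> 0" using pr by (simp add: divide_nonpos_pos)
  then show "\<Delta> \<le> 1" using sg sg0 by linarith
  show "\<Delta> = 1 \<Longrightarrow> \<forall>\<omega>\<in>\<Omega>. p \<omega> > 0 \<longrightarrow> ?PZ \<omega> = 2 * ?PB \<omega>"
  proof (intro ballI impI)
    fix \<omega> assume D1: "\<Delta> = 1" and w: "\<omega> \<in> \<Omega>" and pos: "p \<omega> > 0"
    have "(\<Sum>\<omega>\<in>\<Omega>. g \<omega>) \<le> 0" using sg D1 \<open>((\<Sum>\<omega>\<in>\<Omega>. p \<omega> * r \<omega>) - 1) / ln 2 \<le> 0\<close> by linarith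
    then have "(\<Sum>\<omega>\<in>\<Omega>. g \<omega>) = 0" using sg0 by linarith
    then have g0: "g \<omega> = 0" using sum_nonneg_eq_0_iff[OF fin, of g] gnn w by auto
    have "?PB \<omega> > 0" "?PZ \<omega> > 0" using prb_pos[OF fin nn w] pos by blast+
    then have rp: "r \<omega> > 0" unfolding r_def by simp
    from g0 have "p \<omega> * ((r \<omega> - 1) / ln 2) = p \<omega> * log 2 (r \<omega>)" unfolding g_def
      by simp
    then have "(r \<omega> - 1) / ln 2 = log 2 (r \<omega>)" using pos
      by (metis mult_cancel_left order_less_irrefl times_divide_eq_right)
    then have "ln (r \<omega>) = r \<omega> - 1" by (simp add: log_def)
    then have "r \<omega> = 1" using ln_eq_minus_one[OF rp] by blast
    then show "?PZ \<omega> = 2 * ?PB \<omega>" unfolding r_def using \<open>?PB \<omega> > 0\<close> by (simp add: field_simps)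
  qed
qed


definition sg :: "nat set \<Rightarrow> real" where "sg A = (-1) ^ card A"
definition sd :: "nat set \<Rightarrow> nat set \<Rightarrow> nat set" where "sd A B = (A - B) \<union> (B - A)"

lemma card_sd: assumes "finite A" "finite B"
  shows "card (sd A B) + 2 * card (A \<inter> B) = card A + card B"
proof -
  have u: "A \<union> B = sd A B \<union> (A \<inter> B)" unfolding sd_def by auto
  have "card (A \<union> B) = card (sd A B) + card (A \<inter> B)"
    unfolding u using assms by (intro card_Un_disjoint) (auto simp: sd_def)
  moreover have "card (A \<union> B) + card (A \<inter> B) = card A + card B"
    using card_Un_Int[OF assms] by simp
  ultimately show ?thesis by simp
qed

lemma sg_sd: assumes "finite A" "finite B" shows "sg (sd A B) = sg A * sg B"
proof -
  have "sg A * sg B = (-1) ^ (card A + card B)" unfolding sg_def by (simp add: power_add)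
  also have "\<dots> = (-1) ^ (card (sd A B) + 2 * card (A \<inter> B))" using card_sd[OF assms] by simp
  also have "\<dots> = sg (sd A B)" unfolding sg_def by (simp add: power_add power_mult)
  finally show ?thesis by simp
qed

lemma sg_cases: "sg A = 1 \<or> sg A = -1" unfolding sg_def by (cases "even (card A)") (auto simp: neg_one_even_power neg_one_odd_power)
lemma sg_sq: "sg A * sg A = 1" unfolding sg_def by (simp flip: power_add)
lemma odd_sg: "odd (card A) \<longleftrightarrow> sg A = -1" unfolding sg_def
  by (cases "even (card A)") (auto simp: neg_one_even_power neg_one_odd_power)
lemma sg_empty[simp]: "sg {} = 1" unfolding sg_def by simp
lemma sg_single[simp]: "sg {j} = -1" unfolding sg_def by simp

lemma sd_Int_right: "sd (a \<inter> T) (b \<inter> T) = sd a b \<inter> T" unfolding sd_def by auto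
lemma sd_Int_left: "sd (c \<inter> T) (c \<inter> T') = c \<inter> sd T T'" unfolding sd_def by auto
lemma sd_self[simp]: "sd a a = {}" unfolding sd_def by auto
lemma sd_sd: "sd (sd T Tz) Tz = T" unfolding sd_def by auto
lemma sd_empty_iff: "sd a b = {} \<longleftrightarrow> a = b" unfolding sd_def by auto

lemma char_zero:
  assumes fin: "finite G" and cl: "\<forall>T\<in>G. \<forall>T'\<in>G. sd T T' \<in> G"
    and mult: "\<forall>T\<in>G. \<forall>T'\<in>G. \<phi> (sd T T') = \<phi> T * \<phi> T'"
    and Tz: "Tz \<in> G" "\<phi> Tz = -1"
  shows "(\<Sum>T\<in>G. \<phi> T) = (0::real)"
proof -
  have "(\<Sum>T\<in>G. \<phi> T) = (\<Sum>T\<in>G. \<phi> (sd T Tz))"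
    by (rule sum.reindex_bij_witness[where i="\<lambda>T. sd T Tz" and j="\<lambda>T. sd T Tz"])
       (use cl Tz in \<open>auto simp: sd_sd\<close>)
  also have "\<dots> = (\<Sum>T\<in>G. - \<phi> T)" using mult Tz by (intro sum.cong) auto
  finally show ?thesis by (simp add: sum_negf)
qed

lemma char_sum:
  assumes fin: "finite G" and cl: "\<forall>T\<in>G. \<forall>T'\<in>G. sd T T' \<in> G"
    and mult: "\<forall>T\<in>G. \<forall>T'\<in>G. \<phi> (sd T T') = \<phi> T * \<phi> T'"
    and pm: "\<forall>T\<in>G. \<phi> T = 1 \<or> \<phi> T = -1"
  shows "(\<Sum>T\<in>G. \<phi> T) = 0 \<or> (\<Sum>T\<in>G. \<phi> T) = real (card G)"
proof (cases "\<forall>T\<in>G. \<phi> T = 1")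
  case True then show ?thesis by simp
next
  case False
  then obtain Tz where "Tz \<in> G" "\<phi> Tz = -1" using pm by blast
  then show ?thesis using char_zero[OF fin cl mult] by blast
qed

lemma orth:
  assumes U: "finite U" and a: "a \<subseteq> U" and b: "b \<subseteq> U"
  shows "(\<Sum>T\<in>Pow U. sg (a \<inter> T) * sg (b \<inter> T)) = (if a = b then 2 ^ card U else 0)"
proof -
  have fa: "finite a" "finite b" using U a b finite_subset by auto
  have eq: "sg (a \<inter> T) * sg (b \<inter> T) = sg (sd a b \<inter> T)" for T
    using sg_sd[of "a \<inter> T" "b \<inter> T"] fa by (simp add: sd_Int_right)
  show ?thesis
  proof (cases "a = b")
    case True
    then show ?thesis using eq U by (simp add: card_Pow)
  next
    case False
    then obtain j where j: "j \<in> sd a b" using sd_empty_iff by blast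
    have jU: "j \<in> U" using j a b unfolding sd_def by auto
    have fc: "finite (sd a b)" using fa unfolding sd_def by auto
    have "(\<Sum>T\<in>Pow U. sg (sd a b \<inter> T)) = 0"
    proof (rule char_zero[where Tz="{j}"])
      show "finite (Pow U)" using U by simp
      show "\<forall>T\<in>Pow U. \<forall>T'\<in>Pow U. sd T T' \<in> Pow U" unfolding sd_def by auto
      show "\<forall>T\<in>Pow U. \<forall>T'\<in>Pow U. sg (sd a b \<inter> sd T T') = sg (sd a b \<inter> T) * sg (sd a b \<inter> T')"
        using fc by (auto simp: sd_Int_left[symmetric] sg_sd)
      show "{j} \<in> Pow U" using jU by simp
      show "sg (sd a b \<inter> {j}) = -1" using j by (simp add: Int_insert_right)
    qed
    then show ?thesis using eq False by simp
  qed
qed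


lemma fin_users[simp]: "finite (users m)" unfolding users_def by simp
lemma card_users[simp]: "card (users m) = m" unfolding users_def by simp
lemma fin_space: "finite (mac_space m :: (nat set \<times> 'b::finite) set)"
  unfolding mac_space_def inputs_def by simp

lemma space_sum: "(\<Sum>\<omega>\<in>(mac_space m :: (nat set \<times> 'b::finite) set). f \<omega>) = (\<Sum>x\<in>Pow (users m). \<Sum>y\<in>UNIV. f (x, y))"
  unfolding mac_space_def inputs_def by (simp add: sum.cartesian_product)

lemma pmf_nn: assumes "binary_mac m W"
  shows "\<forall>\<omega>\<in>mac_space m. mac_pmf m W \<omega> \<ge> 0"
  using assms unfolding binary_mac_def mac_space_def mac_pmf_def by auto

lemma pmf_tot: assumes "binary_mac m (W :: nat set \<Rightarrow> 'b::finite \<Rightarrow> real)"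
  shows "(\<Sum>\<omega>\<in>mac_space m. mac_pmf m W \<omega>) = 1"
proof -
  have "(\<Sum>\<omega>\<in>mac_space m. mac_pmf m W \<omega>) = (\<Sum>x\<in>Pow (users m). (\<Sum>y\<in>UNIV. W x y) / 2 ^ m)"
    unfolding space_sum mac_pmf_def by (simp add: sum_divide_distrib)
  also have "\<dots> = (\<Sum>x\<in>Pow (users m). 1 / 2 ^ m)"
    using assms unfolding binary_mac_def inputs_def by (intro sum.cong) auto
  also have "\<dots> = 1" by (simp add: card_Pow)
  finally show ?thesis .
qed

lemma prb_yf:
  assumes "x \<in> Pow (users m)"
  shows "prb (mac_space m) (mac_pmf m W) (\<lambda>(x, y). (y, f x)) (x, y)
       = (\<Sum>x'\<in>{x'\<in>Pow (users m). f x' = f x}. W x' y) / 2 ^ m"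
proof -
  have "{\<omega>'\<in>mac_space m. (case \<omega>' of (x', y') \<Rightarrow> (y', f x')) = (case (x, y) of (x, y) \<Rightarrow> (y, f x))}
        = (\<lambda>x'. (x', y)) ` {x'\<in>Pow (users m). f x' = f x}"
    unfolding mac_space_def inputs_def by auto
  then show ?thesis unfolding prb_def
    by (simp add: sum.reindex inj_on_def mac_pmf_def sum_divide_distrib)
qed

lemma prb_f:
  assumes bm: "binary_mac m (W :: nat set \<Rightarrow> 'b::finite \<Rightarrow> real)" and x: "x \<in> Pow (users m)"
  shows "prb (mac_space m) (mac_pmf m W) (\<lambda>(x, y). f x) (x, y)
       = card {x'\<in>Pow (users m). f x' = f x} / 2 ^ m"
proof -
  have "{\<omega>'\<in>mac_space m. (case \<omega>' of (x', y') \<Rightarrow> f x') = (case (x, y) of (x, y) \<Rightarrow> f x)}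
        = {x'\<in>Pow (users m). f x' = f x} \<times> (UNIV :: 'b set)"
    unfolding mac_space_def inputs_def by auto
  then have "prb (mac_space m) (mac_pmf m W) (\<lambda>(x, y). f x) (x, y)
      = (\<Sum>x'\<in>{x'\<in>Pow (users m). f x' = f x}. (\<Sum>y\<in>UNIV. W x' y) / 2 ^ m)"
    unfolding prb_def by (simp add: sum.cartesian_product[symmetric] mac_pmf_def sum_divide_distrib)
  also have "\<dots> = (\<Sum>x'\<in>{x'\<in>Pow (users m). f x' = f x}. 1 / 2 ^ m)"
    using bm unfolding binary_mac_def inputs_def by (intro sum.cong) auto
  finally show ?thesis by simp
qed

lemma ent_yf:
  "ent (mac_space m) (mac_pmf m (W :: nat set \<Rightarrow> 'b::finite \<Rightarrow> real)) (\<lambda>(x, y). (y, f x))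
   = - (\<Sum>x\<in>Pow (users m). \<Sum>y\<in>UNIV. W x y / 2 ^ m * log 2 ((\<Sum>x'\<in>{x'\<in>Pow (users m). f x' = f x}. W x' y) / 2 ^ m))"
  unfolding ent_def space_sum using prb_yf[of _ m W f]
  by (simp add: mac_pmf_def)

lemma ent_f_const:
  assumes bm: "binary_mac m (W :: nat set \<Rightarrow> 'b::finite \<Rightarrow> real)"
    and c: "\<forall>x\<in>Pow (users m). card {x'\<in>Pow (users m). f x' = f x} = c"
  shows "ent (mac_space m) (mac_pmf m W) (\<lambda>(x, y). f x) = - log 2 (c / 2 ^ m)"
proof -
  have "ent (mac_space m) (mac_pmf m W) (\<lambda>(x, y). f x)
     = - (\<Sum>\<omega>\<in>mac_space m. mac_pmf m W \<omega> * log 2 (c / 2 ^ m))"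
    unfolding ent_def using prb_f[OF bm, of _ f] c
    by (intro arg_cong[where f=uminus] sum.cong) (auto simp: mac_space_def inputs_def)
  also have "\<dots> = - log 2 (c / 2 ^ m)" using pmf_tot[OF bm] by (simp add: sum_distrib_right[symmetric])
  finally show ?thesis .
qed

lemma card_restr:
  assumes E: "finite E" and S: "S \<subseteq> E" and a: "a \<subseteq> S"
  shows "card {x\<in>Pow E. x \<inter> S = a} = 2 ^ (card E - card S)"
proof -
  have "bij_betw (\<lambda>z. z \<union> a) (Pow (E - S)) {x\<in>Pow E. x \<inter> S = a}"
    by (rule bij_betw_byWitness[where f'="\<lambda>x. x - S"]) (use S a in auto)
  then have "card {x\<in>Pow E. x \<inter> S = a} = card (Pow (E - S))" by (simp add: bij_betw_same_card)
  also have "\<dots> = 2 ^ (card E - card S)" using E S by (simp add: card_Pow card_Diff_subset finite_subset)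
  finally show ?thesis .
qed

lemma card_par:
  assumes E: "finite (E :: nat set)" and S: "S \<subseteq> E" and ne: "S \<noteq> {}"
  shows "card {x\<in>Pow E. odd (card (x \<inter> S)) = b} = 2 ^ (card E - 1)"
proof -
  obtain j where j: "j \<in> S" using ne by blast
  have jE: "j \<in> E" using j S by auto
  have flip: "odd (card (sd x {j} \<inter> S)) \<longleftrightarrow> \<not> odd (card (x \<inter> S))" if "x \<subseteq> E" for x
  proof -
    have fx: "finite (x \<inter> S)" using that E finite_subset by blast
    have "sd x {j} \<inter> S = sd (x \<inter> S) ({j} \<inter> S)" by (simp add: sd_Int_right)
    then have "sg (sd x {j} \<inter> S) = - sg (x \<inter> S)" using sg_sd[OF fx, of "{j} \<inter> S"] j by simp
    then show ?thesis unfolding odd_sg using sg_cases[of "x \<inter> S"] by auto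
  qed
  have bij: "bij_betw (\<lambda>x. sd x {j}) {x\<in>Pow E. odd (card (x \<inter> S)) = c} {x\<in>Pow E. odd (card (x \<inter> S)) = (\<not> c)}" for c
    by (rule bij_betw_byWitness[where f'="\<lambda>x. sd x {j}"]) (use jE flip in \<open>auto simp: sd_sd sd_def\<close>)
  have eqc: "card {x\<in>Pow E. odd (card (x \<inter> S)) = c} = card {x\<in>Pow E. odd (card (x \<inter> S)) = (\<not> c)}" for c
    using bij_betw_same_card[OF bij] .
  have "card {x\<in>Pow E. odd (card (x \<inter> S)) = b} + card {x\<in>Pow E. odd (card (x \<inter> S)) = (\<not> b)} = card (Pow E)"
    using E by (subst card_Un_disjoint[symmetric]) (auto intro: arg_cong[where f=card])
  then have "2 * card {x\<in>Pow E. odd (card (x \<inter> S)) = b} = 2 ^ card E" using eqc[of b] E by (simp add: card_Pow)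
  moreover have "card E \<ge> 1" using jE E by (metis One_nat_def Suc_leI card_gt_0_iff empty_iff)
  ultimately show ?thesis by (metis (no_types) One_nat_def Suc_diff_le diff_Suc_1 mult_left_cancel power_Suc zero_neq_numeral)
qed


definition G :: "nat \<Rightarrow> (nat set \<Rightarrow> 'b::finite \<Rightarrow> real) \<Rightarrow> nat set \<Rightarrow> real" where
  "G m W U = ent (mac_space m) (mac_pmf m W) (\<lambda>(x, y). (y, x \<inter> U))"
definition P :: "nat \<Rightarrow> (nat set \<Rightarrow> 'b::finite \<Rightarrow> real) \<Rightarrow> nat set \<Rightarrow> real" where
  "P m W S = ent (mac_space m) (mac_pmf m W) (\<lambda>(x, y). (y, odd (card (x \<inter> S))))"

lemma log_ratio: "k \<le> m \<Longrightarrow> log 2 (2 ^ (m - k) / 2 ^ m) = - real k"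
  by (simp add: log_divide of_nat_diff)

lemma cond_mi_G:
  assumes bm: "binary_mac m (W :: nat set \<Rightarrow> 'b::finite \<Rightarrow> real)" and S: "S \<subseteq> users m"
  shows "cond_mi m W S = card S + G m W (users m - S) - G m W (users m)"
proof -
  have e1: "ent (mac_space m) (mac_pmf m W) (\<lambda>(x, y). x \<inter> S) = card S"
  proof -
    have "ent (mac_space m) (mac_pmf m W) (\<lambda>(x, y). x \<inter> S) = - log 2 (real (2 ^ (m - card S)) / 2 ^ m)"
      using ent_f_const[OF bm, of "\<lambda>x. x \<inter> S" "2 ^ (m - card S)"]
        card_restr[OF fin_users S] by auto
    also have "\<dots> = card S" using S card_mono[OF fin_users S] by (simp add: log_ratio)
    finally show ?thesis .
  qed
  have e3: "ent (mac_space m) (mac_pmf m W) (\<lambda>\<omega>. ((case \<omega> of (x, y) \<Rightarrow> x \<inter> S), (case \<omega> of (x, y) \<Rightarrow> (y, x \<inter> (users m - S)))))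
      = G m W (users m)"
    unfolding G_def
  proof (rule ent_cong, intro ballI)
    fix \<omega> \<omega>' :: "nat set \<times> 'b" assume "\<omega> \<in> mac_space m" "\<omega>' \<in> mac_space m"
    then obtain x y x' y' where w: "\<omega> = (x, y)" "\<omega>' = (x', y')" "x \<subseteq> users m" "x' \<subseteq> users m"
      unfolding mac_space_def inputs_def by auto
    have "x \<inter> S = x' \<inter> S \<and> x \<inter> (users m - S) = x' \<inter> (users m - S) \<longleftrightarrow> x = x'"
      using w(3,4) by blast
    then show "(((case \<omega> of (x, y) \<Rightarrow> x \<inter> S), (case \<omega> of (x, y) \<Rightarrow> (y, x \<inter> (users m - S))))
        = ((case \<omega>' of (x, y) \<Rightarrow> x \<inter> S), (case \<omega>' of (x, y) \<Rightarrow> (y, x \<inter> (users m - S)))))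
      \<longleftrightarrow> ((case \<omega> of (x, y) \<Rightarrow> (y, x \<inter> users m)) = (case \<omega>' of (x, y) \<Rightarrow> (y, x \<inter> users m)))"
      using w by (auto simp: Int_absorb2)
  qed
  show ?thesis unfolding cond_mi_def
    by (simp add: mi_ent[OF fin_space pmf_nn[OF bm]] e1 e3 G_def)
qed

lemma lin_mi_P:
  assumes bm: "binary_mac m (W :: nat set \<Rightarrow> 'b::finite \<Rightarrow> real)" and S: "S \<subseteq> users m"
  shows "lin_mi m W S = (if S = {} then 0 else 1 + G m W {} - P m W S)"
proof -
  have e2: "ent (mac_space m) (mac_pmf m W) (\<lambda>(x, y). y) = G m W {}"
    unfolding G_def by (rule ent_cong) auto
  have e3: "ent (mac_space m) (mac_pmf m W) (\<lambda>\<omega>. ((case \<omega> of (x, y) \<Rightarrow> odd (card (x \<inter> S))), (case \<omega> of (x, y) \<Rightarrow> y)))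
     = P m W S"
    unfolding P_def by (rule ent_cong) auto
  have mi: "lin_mi m W S = ent (mac_space m) (mac_pmf m W) (\<lambda>(x, y). odd (card (x \<inter> S))) + G m W {} - P m W S"
    unfolding lin_mi_def by (simp add: mi_ent[OF fin_space pmf_nn[OF bm]] e2 e3)
  show ?thesis
  proof (cases "S = {}")
    case True
    have cp: "card {x'. x' \<subseteq> users m} = 2 ^ m" using card_Pow[of "users m"] by (simp add: Pow_def)
    have "ent (mac_space m) (mac_pmf m W) (\<lambda>(x, y). odd (card (x \<inter> S))) = - log 2 (real (2 ^ (m - 0)) / 2 ^ m)"
      using ent_f_const[OF bm, of "\<lambda>x. odd (card (x \<inter> S))" "2 ^ (m - 0)"] True cp
      by auto
    moreover have "P m W S = G m W {}" unfolding P_def G_def True by (rule ent_cong) auto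
    ultimately show ?thesis using mi True by simp
  next
    case False
    have cc: "\<forall>x\<in>Pow (users m). card {x'\<in>Pow (users m). odd (card (x' \<inter> S)) = odd (card (x \<inter> S))} = 2 ^ (m - 1)"
      using card_par[OF fin_users S False] unfolding card_users by blast
    have "ent (mac_space m) (mac_pmf m W) (\<lambda>(x, y). odd (card (x \<inter> S))) = - log 2 (real (2 ^ (m - 1)) / 2 ^ m)"
      using ent_f_const[OF bm cc] by simp
    also have "\<dots> = 1"
    proof -
      have "m \<ge> 1" using False S card_mono[OF fin_users S] by (metis card_users card_0_eq fin_users finite_subset le_zero_eq not_less_eq_eq One_nat_def)
      then show ?thesis using log_ratio[of 1 m] by simp
    qed
    finally show ?thesis using mi False by simp
  qed
qed


definition Mw :: "nat \<Rightarrow> (nat set \<Rightarrow> 'b::finite \<Rightarrow> real) \<Rightarrow> nat set \<Rightarrow> 'b \<Rightarrow> nat set \<Rightarrow> real" where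
  "Mw m W U y a = (\<Sum>x\<in>{x\<in>Pow (users m). x \<inter> U = a}. W x y)"
definition ww :: "nat \<Rightarrow> (nat set \<Rightarrow> 'b::finite \<Rightarrow> real) \<Rightarrow> 'b \<Rightarrow> real" where
  "ww m W y = (\<Sum>x\<in>Pow (users m). W x y)"
definition Rw :: "nat \<Rightarrow> (nat set \<Rightarrow> 'b::finite \<Rightarrow> real) \<Rightarrow> 'b \<Rightarrow> nat set \<Rightarrow> real" where
  "Rw m W y T = (\<Sum>x\<in>Pow (users m). W x y * sg (x \<inter> T))"

lemma W_nn: "binary_mac m W \<Longrightarrow> x \<in> Pow (users m) \<Longrightarrow> W x y \<ge> 0"
  unfolding binary_mac_def inputs_def by auto

lemma Mw_nn: "binary_mac m W \<Longrightarrow> Mw m W U y a \<ge> 0"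
  unfolding Mw_def by (intro sum_nonneg) (auto intro: W_nn)

lemma Mw_ge: assumes "binary_mac m W" "x \<in> Pow (users m)" shows "W x y \<le> Mw m W U y (x \<inter> U)"
proof -
  have "W x y = (\<Sum>x'\<in>{x}. W x' y)" by simp
  also have "\<dots> \<le> Mw m W U y (x \<inter> U)" unfolding Mw_def
    using assms by (intro sum_mono2) (auto intro: W_nn)
  finally show ?thesis .
qed

lemma Mw_pos_ex: assumes "Mw m W U y a \<noteq> 0" shows "\<exists>x\<in>Pow (users m). x \<inter> U = a \<and> W x y \<noteq> 0"
proof (rule ccontr)
  assume "\<not> ?thesis"
  then have "\<forall>x\<in>{x\<in>Pow (users m). x \<inter> U = a}. W x y = 0" by auto
  then show False using assms unfolding Mw_def by simp
qed

lemma Mw_empty: "Mw m W {} y {} = ww m W y"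
proof -
  have "{x\<in>Pow (users m). x \<inter> {} = {}} = Pow (users m)" by auto
  then show ?thesis unfolding Mw_def ww_def by simp
qed

lemma ww_pos_ex: assumes "binary_mac m W" "ww m W y > 0" shows "\<exists>x\<in>Pow (users m). W x y > 0"
proof (rule ccontr)
  assume "\<not> ?thesis"
  then have "\<forall>x\<in>Pow (users m). W x y = 0" using W_nn[OF assms(1), of _ y] by (meson antisym_conv not_less)
  then show False using assms(2) unfolding ww_def by simp
qed

lemma ww_nn: "binary_mac m W \<Longrightarrow> ww m W y \<ge> 0"
  unfolding ww_def by (intro sum_nonneg) (auto intro: W_nn)

lemma sum_Mw: assumes "U \<subseteq> users m"
  shows "(\<Sum>a\<in>Pow U. Mw m W U y a) = ww m W y"
  unfolding Mw_def ww_def using assms finite_subset[OF assms fin_users]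
  by (intro sum.group) auto

lemma Rw_empty: "Rw m W y {} = ww m W y" unfolding Rw_def ww_def by simp

lemma Rw_abs: assumes "binary_mac m W" shows "\<bar>Rw m W y T\<bar> \<le> ww m W y"
proof -
  have a1: "\<bar>sg A\<bar> = 1" for A using sg_cases[of A] by auto
  have "\<bar>Rw m W y T\<bar> \<le> (\<Sum>x\<in>Pow (users m). \<bar>W x y * sg (x \<inter> T)\<bar>)" unfolding Rw_def by (rule sum_abs)
  also have "\<dots> = ww m W y" unfolding ww_def
    using W_nn[OF assms] a1 by (intro sum.cong) (auto simp: abs_mult)
  finally show ?thesis .
qed

lemma Rw_via_M:
  assumes U: "U \<subseteq> users m" and T: "T \<subseteq> U"
  shows "Rw m W y T = (\<Sum>a\<in>Pow U. Mw m W U y a * sg (a \<inter> T))"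
proof -
  have fU: "finite U" using finite_subset[OF U fin_users] .
  have "(\<Sum>a\<in>Pow U. Mw m W U y a * sg (a \<inter> T))
      = (\<Sum>a\<in>Pow U. \<Sum>x\<in>{x\<in>Pow (users m). x \<inter> U = a}. W x y * sg (x \<inter> T))"
    unfolding Mw_def sum_distrib_right
  proof (intro sum.cong refl)
    fix a x assume "x \<in> {x\<in>Pow (users m). x \<inter> U = a}"
    then have "a \<inter> T = x \<inter> T" using T by auto
    then show "W x y * sg (a \<inter> T) = W x y * sg (x \<inter> T)" by simp
  qed
  also have "\<dots> = Rw m W y T" unfolding Rw_def using fU by (intro sum.group) auto
  finally show ?thesis by simp
qed

lemma parseval:
  assumes U: "U \<subseteq> users m"
  shows "(\<Sum>T\<in>Pow U. (Rw m W y T)\<^sup>2) = 2 ^ card U * (\<Sum>a\<in>Pow U. (Mw m W U y a)\<^sup>2)"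
proof -
  have fU: "finite U" using finite_subset[OF U fin_users] .
  let ?M = "Mw m W U y"
  have "(\<Sum>T\<in>Pow U. (Rw m W y T)\<^sup>2)
      = (\<Sum>T\<in>Pow U. \<Sum>a\<in>Pow U. \<Sum>b\<in>Pow U. ?M a * ?M b * (sg (a \<inter> T) * sg (b \<inter> T)))"
  proof (intro sum.cong refl)
    fix T assume "T \<in> Pow U"
    then have "(Rw m W y T)\<^sup>2 = (\<Sum>a\<in>Pow U. ?M a * sg (a \<inter> T)) * (\<Sum>b\<in>Pow U. ?M b * sg (b \<inter> T))"
    proof -
      have "Rw m W y T = (\<Sum>a\<in>Pow U. ?M a * sg (a \<inter> T))" by (rule Rw_via_M[OF U]) (use \<open>T \<in> Pow U\<close> in auto)
      then show ?thesis by (simp add: power2_eq_square)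
    qed
    also have "\<dots> = (\<Sum>a\<in>Pow U. \<Sum>b\<in>Pow U. ?M a * ?M b * (sg (a \<inter> T) * sg (b \<inter> T)))"
      unfolding sum_product by (intro sum.cong refl) (simp add: mult_ac)
    finally show "(Rw m W y T)\<^sup>2 = (\<Sum>a\<in>Pow U. \<Sum>b\<in>Pow U. ?M a * ?M b * (sg (a \<inter> T) * sg (b \<inter> T)))" .
  qed
  also have "\<dots> = (\<Sum>a\<in>Pow U. \<Sum>T\<in>Pow U. \<Sum>b\<in>Pow U. ?M a * ?M b * (sg (a \<inter> T) * sg (b \<inter> T)))"
    by (rule sum.swap)
  also have "\<dots> = (\<Sum>a\<in>Pow U. \<Sum>b\<in>Pow U. \<Sum>T\<in>Pow U. ?M a * ?M b * (sg (a \<inter> T) * sg (b \<inter> T)))"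
    by (rule sum.cong[OF refl], rule sum.swap)
  also have "\<dots> = (\<Sum>a\<in>Pow U. \<Sum>b\<in>Pow U. ?M a * ?M b * (\<Sum>T\<in>Pow U. sg (a \<inter> T) * sg (b \<inter> T)))"
    by (simp add: sum_distrib_left)
  also have "\<dots> = (\<Sum>a\<in>Pow U. \<Sum>b\<in>Pow U. (if a = b then ?M a * ?M a * 2 ^ card U else 0))"
    using orth[OF fU] by (intro sum.cong refl) auto
  also have "\<dots> = (\<Sum>a\<in>Pow U. ?M a * ?M a * 2 ^ card U)"
    using fU by (simp add: sum.delta)
  finally show ?thesis by (simp add: power2_eq_square sum_distrib_left algebra_simps)
qed

lemma inversion:
  assumes U: "U \<subseteq> users m" and a: "a \<subseteq> U"
  shows "2 ^ card U * Mw m W U y a = (\<Sum>T\<in>Pow U. sg (a \<inter> T) * Rw m W y T)"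
proof -
  have fU: "finite U" using finite_subset[OF U fin_users] .
  let ?M = "Mw m W U y"
  have "(\<Sum>T\<in>Pow U. sg (a \<inter> T) * Rw m W y T)
      = (\<Sum>T\<in>Pow U. \<Sum>b\<in>Pow U. ?M b * (sg (a \<inter> T) * sg (b \<inter> T)))"
  proof (intro sum.cong refl)
    fix T assume "T \<in> Pow U"
    then have "sg (a \<inter> T) * Rw m W y T = sg (a \<inter> T) * (\<Sum>b\<in>Pow U. ?M b * sg (b \<inter> T))"
    proof -
      have "Rw m W y T = (\<Sum>b\<in>Pow U. ?M b * sg (b \<inter> T))" by (rule Rw_via_M[OF U]) (use \<open>T \<in> Pow U\<close> in auto)
      then show ?thesis by simp
    qed
    also have "\<dots> = (\<Sum>b\<in>Pow U. ?M b * (sg (a \<inter> T) * sg (b \<inter> T)))"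
      unfolding sum_distrib_left by (intro sum.cong refl) (simp add: mult_ac)
    finally show "sg (a \<inter> T) * Rw m W y T = (\<Sum>b\<in>Pow U. ?M b * (sg (a \<inter> T) * sg (b \<inter> T)))" .
  qed
  also have "\<dots> = (\<Sum>b\<in>Pow U. \<Sum>T\<in>Pow U. ?M b * (sg (a \<inter> T) * sg (b \<inter> T)))"
    by (rule sum.swap)
  also have "\<dots> = (\<Sum>b\<in>Pow U. ?M b * (\<Sum>T\<in>Pow U. sg (a \<inter> T) * sg (b \<inter> T)))"
    by (simp add: sum_distrib_left)
  also have "\<dots> = (\<Sum>b\<in>Pow U. (if a = b then ?M b * 2 ^ card U else 0))"
    using orth[OF fU a] by (intro sum.cong refl) auto
  also have "\<dots> = ?M a * 2 ^ card U"
    using fU a by (simp add: sum.delta)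
  finally show ?thesis by simp
qed

lemma G_expr: "G m W U = - (\<Sum>x\<in>Pow (users m). \<Sum>y\<in>UNIV. W x y / 2 ^ m * log 2 (Mw m W U y (x \<inter> U) / 2 ^ m))"
  unfolding G_def ent_yf Mw_def ..

lemma par_sum:
  assumes x: "x \<subseteq> users m"
  shows "2 * (\<Sum>x'\<in>{x'\<in>Pow (users m). odd (card (x' \<inter> S)) = odd (card (x \<inter> S))}. W x' y)
       = ww m W y + sg (x \<inter> S) * Rw m W y S"
proof -
  have "ww m W y + sg (x \<inter> S) * Rw m W y S = (\<Sum>x'\<in>Pow (users m). W x' y * (1 + sg (x \<inter> S) * sg (x' \<inter> S)))"
    unfolding ww_def Rw_def by (simp add: sum_distrib_left sum.distrib algebra_simps)
  also have "\<dots> = (\<Sum>x'\<in>Pow (users m). if odd (card (x' \<inter> S)) = odd (card (x \<inter> S)) then 2 * W x' y else 0)"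
  proof (intro sum.cong refl)
    fix x' show "W x' y * (1 + sg (x \<inter> S) * sg (x' \<inter> S)) = (if odd (card (x' \<inter> S)) = odd (card (x \<inter> S)) then 2 * W x' y else 0)"
      using sg_cases[of "x \<inter> S"] sg_cases[of "x' \<inter> S"] odd_sg[of "x \<inter> S"] odd_sg[of "x' \<inter> S"] by auto
  qed
  also have "\<dots> = 2 * (\<Sum>x'\<in>{x'\<in>Pow (users m). odd (card (x' \<inter> S)) = odd (card (x \<inter> S))}. W x' y)"
    by (simp add: sum.inter_filter[symmetric] sum_distrib_left)
  finally show ?thesis by simp
qed

lemma P_expr: "P m W S = - (\<Sum>x\<in>Pow (users m). \<Sum>y\<in>UNIV. W x y / 2 ^ m * log 2 ((ww m W y + sg (x \<inter> S) * Rw m W y S) / 2 / 2 ^ m))"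
  unfolding P_def ent_yf
  by (intro arg_cong[where f=uminus] sum.cong refl) (simp add: par_sum[symmetric])


definition DD :: "nat \<Rightarrow> (nat set \<Rightarrow> 'b::finite \<Rightarrow> real) \<Rightarrow> nat set \<Rightarrow> real" where
  "DD m W U = G m W U - G m W {}"

lemma DD_cond:
  assumes bm: "binary_mac m (W :: nat set \<Rightarrow> 'b::finite \<Rightarrow> real)" and U: "U \<subseteq> users m"
  shows "DD m W U = cond_mi m W (users m - U) - card (users m - U) - cond_mi m W (users m) + m"
proof -
  have "users m - (users m - U) = U" using U by auto
  then have "cond_mi m W (users m - U) = card (users m - U) + G m W U - G m W (users m)"
    using cond_mi_G[OF bm, of "users m - U"] by auto
  moreover have "cond_mi m W (users m) = m + G m W {} - G m W (users m)"
    using cond_mi_G[OF bm, of "users m"] by simp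
  ultimately show ?thesis unfolding DD_def by simp
qed

lemma pmf_sum2: assumes bm: "binary_mac m (W :: nat set \<Rightarrow> 'b::finite \<Rightarrow> real)"
  shows "(\<Sum>x\<in>Pow (users m). \<Sum>y\<in>UNIV. W x y / 2 ^ m) = 1"
  using pmf_tot[OF bm] unfolding space_sum mac_pmf_def by simp

lemma ent_scale:
  assumes bm: "binary_mac m (W :: nat set \<Rightarrow> 'b::finite \<Rightarrow> real)" and c: "c > 0"
    and h: "\<forall>x\<in>Pow (users m). \<forall>y. W x y \<noteq> 0 \<longrightarrow> h x y = ww m W y * c / 2 ^ m"
  shows "- (\<Sum>x\<in>Pow (users m). \<Sum>y\<in>UNIV. W x y / 2 ^ m * log 2 (h x y)) = G m W {} - log 2 c"
proof -
  have G0: "G m W {} = - (\<Sum>x\<in>Pow (users m). \<Sum>y\<in>UNIV. W x y / 2 ^ m * log 2 (ww m W y / 2 ^ m))"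
    unfolding G_expr using Mw_empty[of m W] by simp
  have t: "W x y / 2 ^ m * log 2 (h x y) = W x y / 2 ^ m * log 2 (ww m W y / 2 ^ m) + W x y / 2 ^ m * log 2 c"
    if x: "x \<in> Pow (users m)" for x y
  proof (cases "W x y = 0")
    case True then show ?thesis by simp
  next
    case False
    then have "W x y > 0" using W_nn[OF bm x] by (simp add: order_le_neq_trans)
    then have wp: "ww m W y > 0" using Mw_ge[OF bm x, of y "{}"] Mw_empty[of m W y] by simp
    have "h x y = (ww m W y / 2 ^ m) * c" using h x False by simp
    moreover have "ww m W y / 2 ^ m > 0" using wp by simp
    ultimately have "log 2 (h x y) = log 2 (ww m W y / 2 ^ m) + log 2 c" using c log_mult_pos[of "ww m W y / 2 ^ m" c 2]
      by metis
    then show ?thesis by (simp add: algebra_simps)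
  qed
  have "(\<Sum>x\<in>Pow (users m). \<Sum>y\<in>UNIV. W x y / 2 ^ m * log 2 (h x y))
      = (\<Sum>x\<in>Pow (users m). \<Sum>y\<in>UNIV. W x y / 2 ^ m * log 2 (ww m W y / 2 ^ m))
        + (\<Sum>x\<in>Pow (users m). \<Sum>y\<in>UNIV. W x y / 2 ^ m) * log 2 c"
    using t by (simp add: sum.distrib sum_distrib_right)
  then show ?thesis using G0 pmf_sum2[OF bm] by simp
qed

lemma mob_eq:
  fixes f g :: "nat set \<Rightarrow> real"
  assumes E: "finite E" and h: "\<forall>U\<subseteq>E. (\<Sum>T\<in>Pow U. f T) = (\<Sum>T\<in>Pow U. g T)"
  shows "T \<subseteq> E \<Longrightarrow> f T = g T"
proof (induction "card T" arbitrary: T rule: less_induct)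
  case less
  have fT: "finite T" using less.prems E finite_subset by blast
  have sp: "(\<Sum>T'\<in>Pow T. k T') = k T + (\<Sum>T'\<in>Pow T - {T}. k T')" for k :: "nat set \<Rightarrow> real"
    using fT by (subst sum.remove[of _ T]) auto
  have "(\<Sum>T'\<in>Pow T - {T}. f T') = (\<Sum>T'\<in>Pow T - {T}. g T')"
  proof (intro sum.cong refl)
    fix T' assume "T' \<in> Pow T - {T}"
    then have "T' \<subset> T" by auto
    then have "card T' < card T" using fT psubset_card_mono by blast
    then show "f T' = g T'" using less.hyps \<open>T' \<subset> T\<close> less.prems by auto
  qed
  then show ?case using h less.prems sp[of f] sp[of g] by auto
qed

lemma mob_int:
  fixes f :: "nat set \<Rightarrow> real"
  assumes E: "finite E" and h: "\<forall>U\<subseteq>E. (\<Sum>T\<in>Pow U. f T) \<in> \<int>"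
  shows "T \<subseteq> E \<Longrightarrow> f T \<in> \<int>"
proof (induction "card T" arbitrary: T rule: less_induct)
  case less
  have fT: "finite T" using less.prems E finite_subset by blast
  have sp: "(\<Sum>T'\<in>Pow T. f T') = f T + (\<Sum>T'\<in>Pow T - {T}. f T')"
    using fT by (subst sum.remove[of _ T]) auto
  have "(\<Sum>T'\<in>Pow T - {T}. f T') \<in> \<int>"
  proof (intro Ints_sum)
    fix T' assume "T' \<in> Pow T - {T}"
    then have "T' \<subset> T" by auto
    then have "card T' < card T" using fT psubset_card_mono by blast
    then show "f T' \<in> \<int>" using less.hyps \<open>T' \<subset> T\<close> less.prems by auto
  qed
  moreover have "(\<Sum>T'\<in>Pow T. f T') \<in> \<int>" using h less.prems by auto
  ultimately have "(\<Sum>T'\<in>Pow T. f T') - (\<Sum>T'\<in>Pow T - {T}. f T') \<in> \<int>" by (intro Ints_diff)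
  then show ?case using sp by simp
qed

lemma int01: assumes "(d::real) \<in> \<int>" "0 \<le> d" "d \<le> 1" shows "d = 0 \<or> d = 1"
proof -
  obtain k where k: "d = of_int k" using assms(1) Ints_cases by blast
  then have "0 \<le> k" "k \<le> 1" using assms by auto
  then have "k = 0 \<or> k = 1" by auto
  then show ?thesis using k by auto
qed


lemma prb_Mw:
  assumes "x \<in> Pow (users m)"
  shows "prb (mac_space m) (mac_pmf m W) (\<lambda>(x, y). (y, x \<inter> U)) (x, y) = Mw m W U y (x \<inter> U) / 2 ^ m"
  using prb_yf[OF assms, of W "\<lambda>x. x \<inter> U" y] unfolding Mw_def by simp

lemma fwd_M:
  assumes bm: "binary_mac m (W :: nat set \<Rightarrow> 'b::finite \<Rightarrow> real)"
    and int: "\<forall>U\<subseteq>users m. DD m W U \<in> \<int>"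
    and U: "U \<subseteq> users m"
  shows "Mw m W U y a = 0 \<or> Mw m W U y a = ww m W y * 2 powr (- DD m W U)"
proof -
  have "finite U" by (rule finite_subset[OF U fin_users])
  then show ?thesis using U
  proof (induction U arbitrary: y a rule: finite_induct)
    case empty
    have D0: "DD m W {} = 0" unfolding DD_def by simp
    show ?case
    proof (cases "a = {}")
      case True then show ?thesis using Mw_empty[of m W y] D0 by simp
    next
      case False
      then have "{x\<in>Pow (users m). x \<inter> {} = a} = {}" by auto
      then have "Mw m W {} y a = 0" unfolding Mw_def by (simp only: sum.empty)
      then show ?thesis by simp
    qed
  next
    case (insert i U')
    let ?\<Omega> = "mac_space m :: (nat set \<times> 'b) set" and ?p = "mac_pmf m W"
    define Z where "Z = (\<lambda>(x::nat set, y::'b). (y, x \<inter> U'))"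
    define B where "B = (\<lambda>(x::nat set, y::'b). i \<in> x)"
    let ?U = "insert i U'"
    have U': "U' \<subseteq> users m" using insert.prems by auto
    have eZ: "ent ?\<Omega> ?p Z = G m W U'" unfolding Z_def G_def ..
    have cg: "\<forall>\<omega>\<in>?\<Omega>. \<forall>\<omega>'\<in>?\<Omega>. (Z \<omega>, B \<omega>) = (Z \<omega>', B \<omega>') \<longleftrightarrow>
        (case \<omega> of (x, y) \<Rightarrow> (y, x \<inter> ?U)) = (case \<omega>' of (x, y) \<Rightarrow> (y, x \<inter> ?U))"
      unfolding Z_def B_def by auto
    have eZB: "ent ?\<Omega> ?p (\<lambda>\<omega>. (Z \<omega>, B \<omega>)) = G m W ?U"
      unfolding G_def using ent_cong[OF cg] .
    note dc = dich[OF fin_space pmf_nn[OF bm] pmf_tot[OF bm], of Z B]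
    have Dint: "DD m W ?U - DD m W U' \<in> \<int>" using int insert.prems U' by (intro Ints_diff) auto
    have Deq: "ent ?\<Omega> ?p (\<lambda>\<omega>. (Z \<omega>, B \<omega>)) - ent ?\<Omega> ?p Z = DD m W ?U - DD m W U'"
      unfolding eZ eZB DD_def by simp
    have D01: "DD m W ?U - DD m W U' = 0 \<or> DD m W ?U - DD m W U' = 1"
      using int01[OF Dint] dc(1,2) Deq by simp
    have pZB: "prb ?\<Omega> ?p (\<lambda>\<omega>. (Z \<omega>, B \<omega>)) (x, y) = Mw m W ?U y (x \<inter> ?U) / 2 ^ m"
      if "x \<in> Pow (users m)" for x y
      using prb_cong[OF cg, of "(x, y)" ?p] prb_Mw[OF that, of W ?U y] that
      by (simp add: mac_space_def inputs_def)
    have pZ: "prb ?\<Omega> ?p Z (x, y) = Mw m W U' y (x \<inter> U') / 2 ^ m" if "x \<in> Pow (users m)" for x y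
      using prb_Mw[OF that, of W U' y] unfolding Z_def .
    show ?case
    proof (cases "Mw m W ?U y a = 0")
      case True then show ?thesis by simp
    next
      case False
      from Mw_pos_ex[OF False] obtain x where x: "x \<in> Pow (users m)" "x \<inter> ?U = a" "W x y \<noteq> 0" by blast
      have Wp: "W x y > 0" using W_nn[OF bm x(1), of y] x(3) by simp
      have om: "(x, y) \<in> ?\<Omega>" using x(1) by (simp add: mac_space_def inputs_def)
      have pp: "?p (x, y) > 0" using Wp by (simp add: mac_pmf_def)
      have M'pos: "Mw m W U' y (x \<inter> U') > 0" using Mw_ge[OF bm x(1), of y U'] Wp by simp
      have M': "Mw m W U' y (x \<inter> U') = ww m W y * 2 powr (- DD m W U')"
        using insert.IH[OF U', of y "x \<inter> U'"] M'pos by (elim disjE) simp_all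
      from D01 show ?thesis
      proof
        assume D0: "DD m W ?U - DD m W U' = 0"
        have "prb ?\<Omega> ?p (\<lambda>\<omega>. (Z \<omega>, B \<omega>)) (x, y) = prb ?\<Omega> ?p Z (x, y)"
        proof -
          have "ent ?\<Omega> ?p (\<lambda>\<omega>. (Z \<omega>, B \<omega>)) - ent ?\<Omega> ?p Z = 0" using Deq D0 by simp
          from dc(3)[OF this] om pp show ?thesis by blast
        qed
        then have "Mw m W ?U y a = Mw m W U' y (x \<inter> U')" using pZB[OF x(1)] pZ[OF x(1)] x(2) by simp
        then show ?thesis using M' D0 by simp
      next
        assume D1: "DD m W ?U - DD m W U' = 1"
        have "prb ?\<Omega> ?p Z (x, y) = 2 * prb ?\<Omega> ?p (\<lambda>\<omega>. (Z \<omega>, B \<omega>)) (x, y)"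
        proof -
          have "ent ?\<Omega> ?p (\<lambda>\<omega>. (Z \<omega>, B \<omega>)) - ent ?\<Omega> ?p Z = 1" using Deq D1 by simp
          from dc(4)[OF this] om pp show ?thesis by blast
        qed
        then have "Mw m W U' y (x \<inter> U') = 2 * Mw m W ?U y a" using pZB[OF x(1)] pZ[OF x(1)] x(2) by simp
        then have "Mw m W ?U y a = ww m W y * 2 powr (- DD m W U') / 2" using M' by simp
        also have "\<dots> = ww m W y * 2 powr (- DD m W ?U)"
        proof -
          have "- DD m W ?U = - DD m W U' - 1" using D1 by simp
          moreover have "2 powr (- DD m W U' - 1) = 2 powr (- DD m W U') / 2" by (simp add: powr_diff)
          ultimately show ?thesis by simp
        qed
        finally show ?thesis by simp
      qed
    qed
  qed
qed


definition lam :: "nat \<Rightarrow> (nat set \<Rightarrow> 'b::finite \<Rightarrow> real) \<Rightarrow> 'b \<Rightarrow> nat set \<Rightarrow> real" where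
  "lam m W y T = (Rw m W y T / ww m W y)\<^sup>2"

lemma fwd_lambda:
  assumes bm: "binary_mac m (W :: nat set \<Rightarrow> 'b::finite \<Rightarrow> real)"
    and int: "\<forall>U\<subseteq>users m. DD m W U \<in> \<int>"
    and U: "U \<subseteq> users m" and wp: "ww m W y > 0"
  shows "(\<Sum>T\<in>Pow U. lam m W y T) = 2 powr (card U - DD m W U)"
proof -
  define c where "c = 2 powr (- DD m W U)"
  have Mc: "Mw m W U y a = 0 \<or> Mw m W U y a = ww m W y * c" for a
    using fwd_M[OF bm int U] unfolding c_def by blast
  have "(\<Sum>a\<in>Pow U. (Mw m W U y a)\<^sup>2) = (\<Sum>a\<in>Pow U. Mw m W U y a * (ww m W y * c))"
  proof (intro sum.cong refl)
    fix a show "(Mw m W U y a)\<^sup>2 = Mw m W U y a * (ww m W y * c)"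
      using Mc[of a] by (elim disjE) (simp_all add: power2_eq_square)
  qed
  also have "\<dots> = (\<Sum>a\<in>Pow U. Mw m W U y a) * (ww m W y * c)"
    by (rule sum_distrib_right[symmetric])
  also have "\<dots> = ww m W y * c * ww m W y"
    using sum_Mw[OF U, of W y] by simp
  finally have sM: "(\<Sum>a\<in>Pow U. (Mw m W U y a)\<^sup>2) = (ww m W y)\<^sup>2 * c" by (simp add: power2_eq_square mult_ac)
  have "(\<Sum>T\<in>Pow U. lam m W y T) = (\<Sum>T\<in>Pow U. (Rw m W y T)\<^sup>2) / (ww m W y)\<^sup>2"
    unfolding lam_def by (simp add: power_divide sum_divide_distrib)
  also have "\<dots> = 2 ^ card U * c" using parseval[OF U, of W y] sM wp by simp
  also have "\<dots> = 2 powr (card U - DD m W U)"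
    unfolding c_def by (simp add: powr_diff powr_realpow divide_inverse powr_minus)
  finally show ?thesis .
qed

lemma lam_empty: "ww m W y > 0 \<Longrightarrow> lam m W y {} = 1"
  unfolding lam_def Rw_empty by simp

lemma lam_bounds: assumes bm: "binary_mac m W" and wp: "ww m W y > 0"
  shows "0 \<le> lam m W y T" "lam m W y T \<le> 1"
proof -
  show "0 \<le> lam m W y T" unfolding lam_def by simp
  have "\<bar>Rw m W y T / ww m W y\<bar> = \<bar>Rw m W y T\<bar> / ww m W y" using wp by (simp add: abs_divide)
  also have "\<dots> \<le> 1" using Rw_abs[OF bm, of y T] wp by (simp add: divide_le_eq_1_pos)
  finally have "\<bar>Rw m W y T / ww m W y\<bar> \<le> 1" .
  then have "\<bar>Rw m W y T / ww m W y\<bar>\<^sup>2 \<le> 1" by (intro power_le_one) auto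
  then show "lam m W y T \<le> 1" unfolding lam_def by (simp only: power2_abs)
qed

lemma fwd_N_int:
  assumes bm: "binary_mac m (W :: nat set \<Rightarrow> 'b::finite \<Rightarrow> real)"
    and int: "\<forall>U\<subseteq>users m. DD m W U \<in> \<int>"
    and U: "U \<subseteq> users m" and wp: "ww m W y > 0"
  shows "2 powr (card U - DD m W U) \<in> \<int>"
proof -
  have "1 \<le> (\<Sum>T\<in>Pow U. lam m W y T)"
  proof -
    have fP: "finite (Pow U)" using finite_subset[OF U fin_users] by simp
    have "(\<Sum>T\<in>{{}}. lam m W y T) \<le> (\<Sum>T\<in>Pow U. lam m W y T)"
      using fP lam_bounds[OF bm wp] by (intro sum_mono2) auto
    then show ?thesis using lam_empty[OF wp] by simp
  qed
  then have ge: "1 \<le> 2 powr (card U - DD m W U)" using fwd_lambda[OF bm int U wp] by simp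
  have "card U - DD m W U \<in> \<int>" using int U by (intro Ints_diff) auto
  then obtain k where k: "card U - DD m W U = of_int k" by (rule Ints_cases)
  have "k \<ge> 0"
  proof (rule ccontr)
    assume "\<not> k \<ge> 0"
    then have "(of_int k :: real) < 0" by simp
    then have "2 powr (of_int k) < (1::real)" by (simp add: powr_less_one)
    then show False using ge k by simp
  qed
  then have "2 powr (card U - DD m W U) = 2 ^ nat k" using k by (simp add: powr_realpow[symmetric])
  then show ?thesis by simp
qed

lemma fwd_lam01:
  assumes bm: "binary_mac m (W :: nat set \<Rightarrow> 'b::finite \<Rightarrow> real)"
    and int: "\<forall>U\<subseteq>users m. DD m W U \<in> \<int>"
    and T: "T \<subseteq> users m" and wp: "ww m W y > 0"
  shows "lam m W y T = 0 \<or> lam m W y T = 1"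
proof -
  have "lam m W y T \<in> \<int>"
    by (rule mob_int[OF fin_users _ T]) (use fwd_lambda[OF bm int _ wp] fwd_N_int[OF bm int _ wp] in auto)
  then show ?thesis using int01 lam_bounds(1,2)[OF bm wp, of T] by simp
qed

lemma lam_indep:
  assumes bmW: "binary_mac m (W :: nat set \<Rightarrow> 'b::finite \<Rightarrow> real)"
    and bmV: "binary_mac m (V :: nat set \<Rightarrow> 'c::finite \<Rightarrow> real)"
    and intW: "\<forall>U\<subseteq>users m. DD m W U \<in> \<int>"
    and intV: "\<forall>U\<subseteq>users m. DD m V U \<in> \<int>"
    and eq: "\<forall>U\<subseteq>users m. DD m W U = DD m V U"
    and T: "T \<subseteq> users m" and wpW: "ww m W y > 0" and wpV: "ww m V y' > 0"
  shows "lam m W y T = lam m V y' T"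
  by (rule mob_eq[OF fin_users _ T]) (use fwd_lambda[OF bmW intW _ wpW] fwd_lambda[OF bmV intV _ wpV] eq in auto)


lemma W_le_ww: "binary_mac m W \<Longrightarrow> x \<in> Pow (users m) \<Longrightarrow> W x y \<le> ww m W y"
  using Mw_ge[of m W x y "{}"] Mw_empty[of m W y] by simp

lemma Rw_zero_ww: "binary_mac m W \<Longrightarrow> ww m W y = 0 \<Longrightarrow> Rw m W y T = 0"
  using Rw_abs[of m W y T] by simp

lemma sg_det:
  assumes bm: "binary_mac m W" and R: "Rw m W y S = s * ww m W y" and s: "s = 1 \<or> s = -1"
    and x: "x \<in> Pow (users m)" and Wx: "W x y \<noteq> 0"
  shows "sg (x \<inter> S) = s"
proof -
  have ss: "s * s = 1" using s by auto
  have tn: "0 \<le> W x' y * (1 - s * sg (x' \<inter> S))" if "x' \<in> Pow (users m)" for x'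
  proof -
    have "s * sg (x' \<inter> S) \<le> 1" using s sg_cases[of "x' \<inter> S"] by auto
    then show ?thesis using W_nn[OF bm that, of y] by simp
  qed
  have "(\<Sum>x'\<in>Pow (users m). W x' y * (1 - s * sg (x' \<inter> S))) = ww m W y - s * Rw m W y S"
    unfolding ww_def Rw_def by (simp add: algebra_simps sum_subtractf sum_distrib_left)
  also have "\<dots> = 0" using R ss by (simp add: mult.assoc[symmetric])
  finally have "W x y * (1 - s * sg (x \<inter> S)) = 0"
    using sum_nonneg_eq_0_iff[of "Pow (users m)" "\<lambda>x'. W x' y * (1 - s * sg (x' \<inter> S))"] tn x by simp
  then have "s * sg (x \<inter> S) = 1" using Wx by simp
  then have "s * (s * sg (x \<inter> S)) = s" by simp
  then show ?thesis using ss by (simp add: mult.assoc[symmetric])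
qed

lemma P_eval:
  assumes bm: "binary_mac m (W :: nat set \<Rightarrow> 'b::finite \<Rightarrow> real)" and c: "c > 0"
    and h: "\<forall>x\<in>Pow (users m). \<forall>y. W x y \<noteq> 0 \<longrightarrow> sg (x \<inter> S) * Rw m W y S = (2 * c - 1) * ww m W y"
  shows "P m W S = G m W {} - log 2 c"
  unfolding P_expr
proof (rule ent_scale[OF bm c], intro ballI allI impI)
  fix x y assume "x \<in> Pow (users m)" "W x y \<noteq> 0"
  then have "sg (x \<inter> S) * Rw m W y S = (2 * c - 1) * ww m W y" using h by blast
  then show "(ww m W y + sg (x \<inter> S) * Rw m W y S) / 2 / 2 ^ m = ww m W y * c / 2 ^ m"
    by (simp add: field_simps)
qed

lemma fwd_lin:
  assumes bm: "binary_mac m (W :: nat set \<Rightarrow> 'b::finite \<Rightarrow> real)"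
    and int: "\<forall>U\<subseteq>users m. DD m W U \<in> \<int>"
    and S: "S \<subseteq> users m" and ne: "S \<noteq> {}" and wp0: "ww m W y0 > 0"
  shows "lin_mi m W S = lam m W y0 S"
proof -
  have same: "lam m W y S = lam m W y0 S" if "ww m W y > 0" for y
    by (rule lam_indep[OF bm bm int int _ S that wp0]) simp
  have lin: "lin_mi m W S = 1 + G m W {} - P m W S" using lin_mi_P[OF bm S] ne by simp
  from fwd_lam01[OF bm int S wp0] show ?thesis
  proof
    assume l0: "lam m W y0 S = 0"
    have R0: "Rw m W y S = 0" for y
    proof (cases "ww m W y > 0")
      case True
      then have "(Rw m W y S / ww m W y)\<^sup>2 = 0" using same[OF True] l0 unfolding lam_def by simp
      then show ?thesis using True by simp
    next
      case False
      then have "ww m W y = 0" using ww_nn[OF bm, of y] by simp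
      then show ?thesis by (rule Rw_zero_ww[OF bm])
    qed
    have "P m W S = G m W {} - log 2 (1/2)"
      by (rule P_eval[OF bm]) (auto simp: R0)
    then show ?thesis using lin l0 by (simp add: log_divide)
  next
    assume l1: "lam m W y0 S = 1"
    have "P m W S = G m W {} - log 2 1"
    proof (rule P_eval[OF bm], simp, intro ballI allI impI)
      fix x y assume x: "x \<in> Pow (users m)" and Wx: "W x y \<noteq> 0"
      have "W x y > 0" using W_nn[OF bm x, of y] Wx by simp
      then have wp: "ww m W y > 0" using W_le_ww[OF bm x, of y] by simp
      then have "(Rw m W y S / ww m W y)\<^sup>2 = 1" using same[OF wp] l1 unfolding lam_def by simp
      then have "Rw m W y S / ww m W y = 1 \<or> Rw m W y S / ww m W y = -1"
        using power2_eq_1_iff by blast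
      then have "Rw m W y S = 1 * ww m W y \<or> Rw m W y S = (-1) * ww m W y"
        using wp by (auto simp: field_simps)
      then obtain s where s: "s = 1 \<or> s = -1" and R: "Rw m W y S = s * ww m W y"
        by blast
      have "sg (x \<inter> S) = s" by (rule sg_det[OF bm R s x Wx])
      then show "sg (x \<inter> S) * Rw m W y S = (2 * 1 - 1) * ww m W y" using R s by auto
    qed
    then show ?thesis using lin l1 by simp
  qed
qed


definition det :: "nat \<Rightarrow> (nat set \<Rightarrow> 'b::finite \<Rightarrow> real) \<Rightarrow> nat set \<Rightarrow> bool" where
  "det m W T \<longleftrightarrow> (\<forall>y. \<forall>x\<in>Pow (users m). \<forall>x'\<in>Pow (users m). W x y \<noteq> 0 \<longrightarrow> W x' y \<noteq> 0 \<longrightarrow> sg (x \<inter> T) = sg (x' \<inter> T))"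

lemma det_empty: "det m W {}" unfolding det_def by simp

lemma det_sd: assumes "det m W T" "det m W T'" shows "det m W (sd T T')"
proof -
  have "sg (x \<inter> sd T T') = sg (x \<inter> T) * sg (x \<inter> T')" if "x \<in> Pow (users m)" for x
  proof -
    have "finite x" using that finite_subset fin_users by blast
    then show ?thesis by (simp add: sd_Int_left[symmetric] sg_sd)
  qed
  then show ?thesis using assms unfolding det_def by metis
qed

lemma det_Rw: assumes "det m W T" "x0 \<in> Pow (users m)" "W x0 y \<noteq> 0"
  shows "Rw m W y T = sg (x0 \<inter> T) * ww m W y"
proof -
  have "Rw m W y T = (\<Sum>x\<in>Pow (users m). W x y * sg (x0 \<inter> T))"
    unfolding Rw_def
  proof (intro sum.cong refl)
    fix x assume x: "x \<in> Pow (users m)"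
    show "W x y * sg (x \<inter> T) = W x y * sg (x0 \<inter> T)"
    proof (cases "W x y = 0")
      case False then show ?thesis using assms x unfolding det_def by metis
    qed simp
  qed
  also have "\<dots> = (\<Sum>x\<in>Pow (users m). W x y) * sg (x0 \<inter> T)" by (rule sum_distrib_right[symmetric])
  finally show ?thesis unfolding ww_def by (simp add: mult.commute)
qed

lemma ww_exists: assumes bm: "binary_mac m (W :: nat set \<Rightarrow> 'b::finite \<Rightarrow> real)"
  shows "\<exists>y. ww m W y > 0"
proof (rule ccontr)
  assume "\<not> ?thesis"
  then have z: "ww m W y = 0" for y using ww_nn[OF bm, of y] by (meson antisym_conv not_less)
  have "(\<Sum>y\<in>UNIV. ww m W y) = (\<Sum>x\<in>Pow (users m). \<Sum>y\<in>UNIV. W x y)"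
    unfolding ww_def by (rule sum.swap)
  also have "\<dots> = (\<Sum>x\<in>Pow (users m). 1)"
    using bm unfolding binary_mac_def inputs_def by (intro sum.cong) auto
  finally show False using z by (simp add: card_Pow)
qed

lemma bwd_pointwise:
  assumes bm: "binary_mac m (W :: nat set \<Rightarrow> 'b::finite \<Rightarrow> real)"
    and S: "S \<subseteq> users m" and ne: "S \<noteq> {}"
  shows "lin_mi m W S = 1 \<Longrightarrow> det m W S"
    and "lin_mi m W S = 0 \<Longrightarrow> \<forall>y. Rw m W y S = 0"
proof -
  let ?\<Omega> = "mac_space m :: (nat set \<times> 'b) set" and ?p = "mac_pmf m W"
  define Z where "Z = (\<lambda>(x::nat set, y::'b). y)"
  define B where "B = (\<lambda>(x::nat set, y::'b). odd (card (x \<inter> S)))"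
  have cg1: "\<forall>\<omega>\<in>?\<Omega>. \<forall>\<omega>'\<in>?\<Omega>. Z \<omega> = Z \<omega>' \<longleftrightarrow> (case \<omega> of (x, y) \<Rightarrow> (y, x \<inter> {})) = (case \<omega>' of (x, y) \<Rightarrow> (y, x \<inter> {}))"
    unfolding Z_def by auto
  have cg2: "\<forall>\<omega>\<in>?\<Omega>. \<forall>\<omega>'\<in>?\<Omega>. (Z \<omega>, B \<omega>) = (Z \<omega>', B \<omega>') \<longleftrightarrow> (case \<omega> of (x, y) \<Rightarrow> (y, odd (card (x \<inter> S)))) = (case \<omega>' of (x, y) \<Rightarrow> (y, odd (card (x \<inter> S))))"
    unfolding Z_def B_def by auto
  have eZ: "ent ?\<Omega> ?p Z = G m W {}" unfolding G_def using ent_cong[OF cg1] .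
  have eZB: "ent ?\<Omega> ?p (\<lambda>\<omega>. (Z \<omega>, B \<omega>)) = P m W S" unfolding P_def using ent_cong[OF cg2] .
  have lin: "lin_mi m W S = 1 + G m W {} - P m W S" using lin_mi_P[OF bm S] ne by simp
  note dc = dich[OF fin_space pmf_nn[OF bm] pmf_tot[OF bm], of Z B]
  have pZ: "prb ?\<Omega> ?p Z (x, y) = ww m W y / 2 ^ m" if x: "x \<in> Pow (users m)" for x y
    using prb_cong[OF cg1, of "(x, y)" ?p] prb_Mw[OF x, of W "{}" y] Mw_empty[of m W y] x
    by (simp add: mac_space_def inputs_def)
  have pZB: "2 * prb ?\<Omega> ?p (\<lambda>\<omega>. (Z \<omega>, B \<omega>)) (x, y) = (ww m W y + sg (x \<inter> S) * Rw m W y S) / 2 ^ m"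
    if x: "x \<in> Pow (users m)" for x y
  proof -
    have "prb ?\<Omega> ?p (\<lambda>\<omega>. (Z \<omega>, B \<omega>)) (x, y) = prb ?\<Omega> ?p (\<lambda>(x, y). (y, odd (card (x \<inter> S)))) (x, y)"
      using prb_cong[OF cg2, of "(x, y)" ?p] x by (simp add: mac_space_def inputs_def)
    also have "\<dots> = (\<Sum>x'\<in>{x'\<in>Pow (users m). odd (card (x' \<inter> S)) = odd (card (x \<inter> S))}. W x' y) / 2 ^ m"
      by (rule prb_yf[OF x])
    finally show ?thesis using par_sum[where x=x and m=m and S=S and W=W and y=y] x by simp
  qed
  have sq: "sg (x \<inter> S) * sg (x \<inter> S) = 1" for x by (rule sg_sq)
  show "lin_mi m W S = 1 \<Longrightarrow> det m W S"
  proof -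
    assume l1: "lin_mi m W S = 1"
    have D0: "ent ?\<Omega> ?p (\<lambda>\<omega>. (Z \<omega>, B \<omega>)) - ent ?\<Omega> ?p Z = 0" using lin l1 eZ eZB by simp
    show "det m W S" unfolding det_def
    proof (intro allI ballI impI)
      fix y x x' assume x: "x \<in> Pow (users m)" and x': "x' \<in> Pow (users m)" and Wx: "W x y \<noteq> 0" and Wx': "W x' y \<noteq> 0"
      have om: "(x, y) \<in> ?\<Omega>" using x by (simp add: mac_space_def inputs_def)
      have pp: "?p (x, y) > 0" using W_nn[OF bm x, of y] Wx by (simp add: mac_pmf_def)
      have "prb ?\<Omega> ?p (\<lambda>\<omega>. (Z \<omega>, B \<omega>)) (x, y) = prb ?\<Omega> ?p Z (x, y)"
        using dc(3)[OF D0] om pp by blast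
      then have "ww m W y + sg (x \<inter> S) * Rw m W y S = 2 * ww m W y"
        using pZB[OF x, of y] pZ[OF x, of y] by (simp add: field_simps)
      then have "sg (x \<inter> S) * (sg (x \<inter> S) * Rw m W y S) = sg (x \<inter> S) * ww m W y" by simp
      then have R: "Rw m W y S = sg (x \<inter> S) * ww m W y" using sq[of x] by (simp add: mult.assoc[symmetric])
      have "sg (x' \<inter> S) = sg (x \<inter> S)" by (rule sg_det[OF bm R sg_cases x' Wx'])
      then show "sg (x \<inter> S) = sg (x' \<inter> S)" by simp
    qed
  qed
  show "lin_mi m W S = 0 \<Longrightarrow> \<forall>y. Rw m W y S = 0"
  proof
    fix y assume l0: "lin_mi m W S = 0"
    have D1: "ent ?\<Omega> ?p (\<lambda>\<omega>. (Z \<omega>, B \<omega>)) - ent ?\<Omega> ?p Z = 1" using lin l0 eZ eZB by simp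
    show "Rw m W y S = 0"
    proof (cases "ww m W y > 0")
      case False
      then have "ww m W y = 0" using ww_nn[OF bm, of y] by simp
      then show ?thesis by (rule Rw_zero_ww[OF bm])
    next
      case True
      from ww_pos_ex[OF bm True] obtain x where x: "x \<in> Pow (users m)" "W x y > 0" by blast
      have om: "(x, y) \<in> ?\<Omega>" using x by (simp add: mac_space_def inputs_def)
      have pp: "?p (x, y) > 0" using x by (simp add: mac_pmf_def)
      have "prb ?\<Omega> ?p Z (x, y) = 2 * prb ?\<Omega> ?p (\<lambda>\<omega>. (Z \<omega>, B \<omega>)) (x, y)"
        using dc(4)[OF D1] om pp by blast
      then have "ww m W y = ww m W y + sg (x \<inter> S) * Rw m W y S"
        using pZB[OF x(1), of y] pZ[OF x(1), of y] by (simp add: field_simps)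
      then have "sg (x \<inter> S) * Rw m W y S = 0" by simp
      then show ?thesis using sg_cases[of "x \<inter> S"] by auto
    qed
  qed
qed

lemma det_iff_lin:
  assumes bm: "binary_mac m (W :: nat set \<Rightarrow> 'b::finite \<Rightarrow> real)"
    and h: "\<forall>S\<subseteq>users m. lin_mi m W S \<in> {0, 1}"
    and T: "T \<subseteq> users m"
  shows "det m W T \<longleftrightarrow> T = {} \<or> lin_mi m W T = 1"
proof
  assume d: "det m W T"
  show "T = {} \<or> lin_mi m W T = 1"
  proof (rule ccontr)
    assume "\<not> ?thesis"
    then have ne: "T \<noteq> {}" and l0: "lin_mi m W T = 0" using h T by auto
    obtain y where wp: "ww m W y > 0" using ww_exists[OF bm] by blast
    from ww_pos_ex[OF bm wp] obtain x where x: "x \<in> Pow (users m)" "W x y > 0" by blast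
    have "Rw m W y T = sg (x \<inter> T) * ww m W y" using det_Rw[OF d x(1)] x(2) by simp
    moreover have "Rw m W y T = 0" using bwd_pointwise(2)[OF bm T ne l0] by blast
    ultimately show False using wp sg_cases[of "x \<inter> T"] by auto
  qed
next
  assume "T = {} \<or> lin_mi m W T = 1"
  then show "det m W T"
  proof
    assume "T = {}" then show ?thesis using det_empty by simp
  next
    assume l1: "lin_mi m W T = 1"
    show ?thesis
    proof (cases "T = {}")
      case True then show ?thesis using det_empty by simp
    next
      case False show ?thesis by (rule bwd_pointwise(1)[OF bm T False l1])
    qed
  qed
qed


definition Lset :: "nat \<Rightarrow> (nat set \<Rightarrow> 'b::finite \<Rightarrow> real) \<Rightarrow> nat set \<Rightarrow> nat set set" where
  "Lset m W U = {T\<in>Pow U. det m W T}"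

lemma Lset_fin: "U \<subseteq> users m \<Longrightarrow> finite (Lset m W U)"
  unfolding Lset_def using finite_subset[of U "users m"] by simp

lemma Lset_card_pos: assumes "U \<subseteq> users m" shows "card (Lset m W U) > 0"
proof -
  have "{} \<in> Lset m W U" unfolding Lset_def using det_empty by simp
  then show ?thesis using Lset_fin[OF assms, of W] card_gt_0_iff by blast
qed

lemma Mw_le_ww: assumes bm: "binary_mac m W" and U: "U \<subseteq> users m" and a: "a \<subseteq> U"
  shows "Mw m W U y a \<le> ww m W y"
proof -
  have "Mw m W U y a \<le> (\<Sum>a'\<in>Pow U. Mw m W U y a')"
    using a Mw_nn[OF bm] finite_subset[OF U fin_users] by (intro member_le_sum) auto
  then show ?thesis using sum_Mw[OF U, of W y] by linarith
qed

lemma bwd_M: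
  assumes bm: "binary_mac m (W :: nat set \<Rightarrow> 'b::finite \<Rightarrow> real)"
    and h: "\<forall>S\<subseteq>users m. lin_mi m W S \<in> {0, 1}"
    and U: "U \<subseteq> users m"
  shows "Mw m W U y a = 0 \<or> Mw m W U y a = ww m W y * (card (Lset m W U) / 2 ^ card U)"
proof (cases "a \<subseteq> U")
  case False
  then have "{x\<in>Pow (users m). x \<inter> U = a} = {}" by auto
  then have "Mw m W U y a = 0" unfolding Mw_def by (simp only: sum.empty)
  then show ?thesis by simp
next
  case a: True
  show ?thesis
  proof (cases "ww m W y > 0")
    case False
    then have "ww m W y = 0" using ww_nn[OF bm, of y] by simp
    then have "Mw m W U y a = 0" using Mw_le_ww[OF bm U a, of y] Mw_nn[OF bm, of U y a] by simp
    then show ?thesis by simp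
  next
    case wp: True
    from ww_pos_ex[OF bm wp] obtain x0 where x0: "x0 \<in> Pow (users m)" "W x0 y > 0" by blast
    have fU: "finite U" using finite_subset[OF U fin_users] .
    have LsubP: "Lset m W U \<subseteq> Pow U" unfolding Lset_def by auto
    define c where "c = sd a x0"
    have fa: "finite a" using a fU finite_subset by blast
    have fx0: "finite x0" using x0(1) finite_subset fin_users by blast
    have fc: "finite c" unfolding c_def sd_def using fa fx0 by simp
    have "2 ^ card U * Mw m W U y a = (\<Sum>T\<in>Pow U. sg (a \<inter> T) * Rw m W y T)"
      by (rule inversion[OF U a])
    also have "\<dots> = (\<Sum>T\<in>Lset m W U. sg (a \<inter> T) * Rw m W y T)"
    proof -
      have z: "\<forall>T\<in>Pow U - Lset m W U. sg (a \<inter> T) * Rw m W y T = 0"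
      proof
        fix T assume T: "T \<in> Pow U - Lset m W U"
        then have TE: "T \<subseteq> users m" and nd: "\<not> det m W T" using U unfolding Lset_def by auto
        then have ne: "T \<noteq> {}" and l: "lin_mi m W T \<noteq> 1" using det_iff_lin[OF bm h TE] by auto
        then have "lin_mi m W T = 0" using h TE by auto
        then have "Rw m W y T = 0" using bwd_pointwise(2)[OF bm TE ne] by blast
        then show "sg (a \<inter> T) * Rw m W y T = 0" by simp
      qed
      have fP: "finite (Pow U)" using fU by simp
      show ?thesis by (rule sum.mono_neutral_right[OF fP LsubP z])
    qed
    also have "\<dots> = (\<Sum>T\<in>Lset m W U. sg (c \<inter> T)) * ww m W y"
      unfolding sum_distrib_right
    proof (intro sum.cong refl)
      fix T assume "T \<in> Lset m W U"
      then have d: "det m W T" unfolding Lset_def by auto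
      have "W x0 y \<noteq> 0" using x0(2) by simp
      then have "Rw m W y T = sg (x0 \<inter> T) * ww m W y" by (rule det_Rw[OF d x0(1)])
      moreover have "sg (a \<inter> T) * sg (x0 \<inter> T) = sg (c \<inter> T)"
        unfolding c_def using sg_sd[of "a \<inter> T" "x0 \<inter> T"] fa fx0 by (simp add: sd_Int_right)
      ultimately show "sg (a \<inter> T) * Rw m W y T = sg (c \<inter> T) * ww m W y" by (simp add: mult.assoc[symmetric])
    qed
    finally have eq: "2 ^ card U * Mw m W U y a = (\<Sum>T\<in>Lset m W U. sg (c \<inter> T)) * ww m W y" .
    have cs: "(\<Sum>T\<in>Lset m W U. sg (c \<inter> T)) = 0 \<or> (\<Sum>T\<in>Lset m W U. sg (c \<inter> T)) = real (card (Lset m W U))"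
    proof (rule char_sum)
      show "finite (Lset m W U)" by (rule Lset_fin[OF U])
      show "\<forall>T\<in>Lset m W U. \<forall>T'\<in>Lset m W U. sd T T' \<in> Lset m W U"
        unfolding Lset_def using det_sd by (auto simp: sd_def)
      show "\<forall>T\<in>Lset m W U. \<forall>T'\<in>Lset m W U. sg (c \<inter> sd T T') = sg (c \<inter> T) * sg (c \<inter> T')"
        using fc by (auto simp: sd_Int_left[symmetric] sg_sd)
      show "\<forall>T\<in>Lset m W U. sg (c \<inter> T) = 1 \<or> sg (c \<inter> T) = -1" using sg_cases by blast
    qed
    from cs show ?thesis
    proof
      assume "(\<Sum>T\<in>Lset m W U. sg (c \<inter> T)) = 0"
      then show ?thesis using eq by simp
    next
      assume "(\<Sum>T\<in>Lset m W U. sg (c \<inter> T)) = real (card (Lset m W U))"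
      then have "2 ^ card U * Mw m W U y a = real (card (Lset m W U)) * ww m W y" using eq by simp
      then have "Mw m W U y a = ww m W y * (card (Lset m W U) / 2 ^ card U)"
        by (simp add: field_simps)
      then show ?thesis by simp
    qed
  qed
qed

lemma bwd_G:
  assumes bm: "binary_mac m (W :: nat set \<Rightarrow> 'b::finite \<Rightarrow> real)"
    and h: "\<forall>S\<subseteq>users m. lin_mi m W S \<in> {0, 1}"
    and U: "U \<subseteq> users m"
  shows "G m W U = G m W {} - log 2 (card (Lset m W U) / 2 ^ card U)"
  unfolding G_expr[of m W U]
proof (rule ent_scale[OF bm, where h="\<lambda>x y. Mw m W U y (x \<inter> U) / 2 ^ m" and c="card (Lset m W U) / 2 ^ card U"])
  show "0 < real (card (Lset m W U)) / 2 ^ card U" using Lset_card_pos[OF U, of W] by simp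
next
  show "\<forall>x\<in>Pow (users m). \<forall>y. W x y \<noteq> 0 \<longrightarrow> Mw m W U y (x \<inter> U) / 2 ^ m = ww m W y * (real (card (Lset m W U)) / 2 ^ card U) / 2 ^ m"
  proof (intro ballI allI impI)
  fix x y assume x: "x \<in> Pow (users m)" and Wx: "W x y \<noteq> 0"
  have "W x y > 0" using W_nn[OF bm x, of y] Wx by simp
  then have "Mw m W U y (x \<inter> U) > 0" using Mw_ge[OF bm x, of y U] by simp
  then have "Mw m W U y (x \<inter> U) = ww m W y * (card (Lset m W U) / 2 ^ card U)"
    using bwd_M[OF bm h U, of y "x \<inter> U"] by auto
  then show "Mw m W U y (x \<inter> U) / 2 ^ m = ww m W y * (real (card (Lset m W U)) / 2 ^ card U) / 2 ^ m"
    by simp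
  qed
qed

lemma bwd_pow2:
  assumes bm: "binary_mac m (W :: nat set \<Rightarrow> 'b::finite \<Rightarrow> real)"
    and h: "\<forall>S\<subseteq>users m. lin_mi m W S \<in> {0, 1}"
    and U: "U \<subseteq> users m"
  shows "\<exists>j. card (Lset m W U) = 2 ^ j"
proof -
  obtain y where wp: "ww m W y > 0" using ww_exists[OF bm] by blast
  define c where "c = card (Lset m W U) / 2 ^ card U"
  define K where "K = {a\<in>Pow U. Mw m W U y a \<noteq> 0}"
  have fU: "finite U" using finite_subset[OF U fin_users] .
  have "ww m W y = (\<Sum>a\<in>Pow U. Mw m W U y a)" using sum_Mw[OF U, of W y] by simp
  also have "\<dots> = (\<Sum>a\<in>K. Mw m W U y a)"
    unfolding K_def using fU by (intro sum.mono_neutral_right) auto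
  also have "\<dots> = (\<Sum>a\<in>K. ww m W y * c)"
    unfolding K_def c_def using bwd_M[OF bm h U, of y] by (intro sum.cong) auto
  finally have "ww m W y = card K * (ww m W y * c)" by simp
  then have "1 = card K * c" using wp by (simp add: field_simps)
  then have "real (card K * card (Lset m W U)) = real (2 ^ card U)" unfolding c_def by (simp add: field_simps)
  then have "card K * card (Lset m W U) = 2 ^ card U" by (simp only: of_nat_eq_iff)
  then have "card (Lset m W U) dvd 2 ^ card U" by (metis dvd_triv_right)
  then show ?thesis using divides_primepow_nat[of 2 "card (Lset m W U)" "card U"] by auto
qed

lemma bwd_cond:
  assumes bm: "binary_mac m (W :: nat set \<Rightarrow> 'b::finite \<Rightarrow> real)"
    and h: "\<forall>S\<subseteq>users m. lin_mi m W S \<in> {0, 1}"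
    and S: "S \<subseteq> users m"
  shows "cond_mi m W S = log 2 (card (Lset m W (users m))) - log 2 (card (Lset m W (users m - S)))"
proof -
  have l: "log 2 (card (Lset m W U) / 2 ^ card U) = log 2 (card (Lset m W U)) - card U" if "U \<subseteq> users m" for U
    using Lset_card_pos[OF that, of W] by (simp add: log_divide_pos)
  have cS: "card (users m - S) = m - card S" using S by (simp add: card_Diff_subset finite_subset)
  have le: "card S \<le> m" using card_mono[OF fin_users S] by simp
  show ?thesis
    using cond_mi_G[OF bm S] bwd_G[OF bm h, of "users m - S"] bwd_G[OF bm h, of "users m"]
      l[of "users m - S"] l[of "users m"] cS le
    by (simp add: of_nat_diff)
qed


lemma ints_DD:
  assumes bm: "binary_mac m (W :: nat set \<Rightarrow> 'b::finite \<Rightarrow> real)"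
    and h: "\<forall>S\<subseteq>users m. cond_mi m W S \<in> \<int>"
  shows "\<forall>U\<subseteq>users m. DD m W U \<in> \<int>"
proof (intro allI impI)
  fix U assume U: "U \<subseteq> users m"
  have "cond_mi m W (users m - U) \<in> \<int>" "cond_mi m W (users m) \<in> \<int>" using h by auto
  then have "cond_mi m W (users m - U) - real (card (users m - U)) - cond_mi m W (users m) + real m \<in> \<int>"
    by (intro Ints_add Ints_diff) (auto simp del: of_nat_diff)
  then show "DD m W U \<in> \<int>" using DD_cond[OF bm U] by simp
qed

lemma lin_fwd:
  assumes bm: "binary_mac m (W :: nat set \<Rightarrow> 'b::finite \<Rightarrow> real)"
    and h: "\<forall>S\<subseteq>users m. cond_mi m W S \<in> \<int>"
    and S: "S \<subseteq> users m"
  shows "lin_mi m W S = (if S = {} then 0 else lam m W (SOME y. ww m W y > 0) S)"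
proof (cases "S = {}")
  case True then show ?thesis using lin_mi_P[OF bm S] by simp
next
  case False
  have "ww m W (SOME y. ww m W y > 0) > 0" using ww_exists[OF bm] by (rule someI_ex)
  then show ?thesis using fwd_lin[OF bm ints_DD[OF bm h] S False] False by simp
qed

lemma pow2_log: "log 2 (real (2 ^ j)) = real j" by simp

theorem mainTheorem5:
  fixes m :: nat
    and W :: "nat set \<Rightarrow> 'b::finite \<Rightarrow> real"
    and V :: "nat set \<Rightarrow> 'c::finite \<Rightarrow> real"
  assumes "binary_mac m W" and "binary_mac m V"
  shows "((\<forall>S\<subseteq>users m. cond_mi m W S \<in> \<int>) \<longrightarrow>
            (\<forall>S\<subseteq>users m. lin_mi m W S \<in> {0, 1}))
       \<and> ((\<forall>S\<subseteq>users m. cond_mi m W S \<in> \<int>) \<and> (\<forall>S\<subseteq>users m. cond_mi m V S \<in> \<int>)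
            \<and> (\<forall>S\<subseteq>users m. cond_mi m W S = cond_mi m V S)
          \<longrightarrow> (\<forall>S\<subseteq>users m. lin_mi m W S = lin_mi m V S))
       \<and> ((\<forall>S\<subseteq>users m. lin_mi m W S \<in> {0, 1}) \<longrightarrow>
            (\<forall>S\<subseteq>users m. cond_mi m W S \<in> \<int>))
       \<and> ((\<forall>S\<subseteq>users m. lin_mi m W S \<in> {0, 1}) \<and> (\<forall>S\<subseteq>users m. lin_mi m V S \<in> {0, 1})
            \<and> (\<forall>S\<subseteq>users m. lin_mi m W S = lin_mi m V S)
          \<longrightarrow> (\<forall>S\<subseteq>users m. cond_mi m W S = cond_mi m V S))"
proof (intro conjI impI allI)
  show "lin_mi m W S \<in> {0, 1}" if h: "\<forall>S\<subseteq>users m. cond_mi m W S \<in> \<int>" and S: "S \<subseteq> users m" for S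
  proof (cases "S = {}")
    case True then show ?thesis using lin_fwd[OF assms(1) h S] by simp
  next
    case False
    have wp: "ww m W (SOME y. ww m W y > 0) > 0" using ww_exists[OF assms(1)] by (rule someI_ex)
    show ?thesis using lin_fwd[OF assms(1) h S] False fwd_lam01[OF assms(1) ints_DD[OF assms(1) h] S wp] by auto
  qed
next
  fix S assume h: "(\<forall>S\<subseteq>users m. cond_mi m W S \<in> \<int>) \<and> (\<forall>S\<subseteq>users m. cond_mi m V S \<in> \<int>)
            \<and> (\<forall>S\<subseteq>users m. cond_mi m W S = cond_mi m V S)"
    and S: "S \<subseteq> users m"
  have hW: "\<forall>S\<subseteq>users m. cond_mi m W S \<in> \<int>" and hV: "\<forall>S\<subseteq>users m. cond_mi m V S \<in> \<int>"
    and eq: "\<forall>S\<subseteq>users m. cond_mi m W S = cond_mi m V S" using h by auto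
  have eqD: "\<forall>U\<subseteq>users m. DD m W U = DD m V U"
  proof (intro allI impI)
    fix U assume U: "U \<subseteq> users m"
    show "DD m W U = DD m V U" using DD_cond[OF assms(1) U] DD_cond[OF assms(2) U] eq U by auto
  qed
  have wpW: "ww m W (SOME y. ww m W y > 0) > 0" using ww_exists[OF assms(1)] by (rule someI_ex)
  have wpV: "ww m V (SOME y. ww m V y > 0) > 0" using ww_exists[OF assms(2)] by (rule someI_ex)
  show "lin_mi m W S = lin_mi m V S"
    using lin_fwd[OF assms(1) hW S] lin_fwd[OF assms(2) hV S]
      lam_indep[OF assms(1) assms(2) ints_DD[OF assms(1) hW] ints_DD[OF assms(2) hV] eqD S wpW wpV] by simp
next
  fix S assume h: "\<forall>S\<subseteq>users m. lin_mi m W S \<in> {0, 1}" and S: "S \<subseteq> users m"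
  obtain j1 where j1: "card (Lset m W (users m)) = 2 ^ j1" using bwd_pow2[OF assms(1) h, of "users m"] by auto
  obtain j2 where j2: "card (Lset m W (users m - S)) = 2 ^ j2" using bwd_pow2[OF assms(1) h, of "users m - S"] by auto
  have "cond_mi m W S = real j1 - real j2" using bwd_cond[OF assms(1) h S] j1 j2 by simp
  then show "cond_mi m W S \<in> \<int>" by simp
next
  fix S assume h: "(\<forall>S\<subseteq>users m. lin_mi m W S \<in> {0, 1}) \<and> (\<forall>S\<subseteq>users m. lin_mi m V S \<in> {0, 1})
            \<and> (\<forall>S\<subseteq>users m. lin_mi m W S = lin_mi m V S)"
    and S: "S \<subseteq> users m"
  have hW: "\<forall>S\<subseteq>users m. lin_mi m W S \<in> {0, 1}" and hV: "\<forall>S\<subseteq>users m. lin_mi m V S \<in> {0, 1}"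
    and eq: "\<forall>S\<subseteq>users m. lin_mi m W S = lin_mi m V S" using h by auto
  have eqL: "Lset m W U = Lset m V U" if U: "U \<subseteq> users m" for U
  proof -
    have "det m W T = det m V T" if T: "T \<in> Pow U" for T
    proof -
      have TE: "T \<subseteq> users m" using T U by auto
      show ?thesis using det_iff_lin[OF assms(1) hW TE] det_iff_lin[OF assms(2) hV TE] eq TE by auto
    qed
    then show ?thesis unfolding Lset_def by auto
  qed
  have "users m - S \<subseteq> users m" by auto
  then show "cond_mi m W S = cond_mi m V S"
    using bwd_cond[OF assms(1) hW S] bwd_cond[OF assms(2) hV S] eqL[of "users m"] eqL[of "users m - S"] by simp
qed


end
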